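(* For every $n\ge k$, every $\beta\in\mathbb{R}^k$ and every $\sigma>0$, the distribution of $\sqrt{n}(\tilde\beta-\beta)$ under $\mathbb{P}_{n,\beta,\sigma}$ equals the distribution of $$B_n\sqrt n\beta_2 + C_n\sqrt n Z_1 + \Big[1+\exp(2\alpha k_2)\exp\big(-\alpha\|Z_2+(X_2'(I-P_R)X_2)^{1/2}\beta_2\|^2/\sigma^2\big)\Big]^{-1}\{D_n\sqrt n Z_2 - B_n\sqrt n\beta_2\},$$ which also equals the distribution of $$C_n\sqrt n Z_1 + D_n\sqrt n Z_2 - \Big[1+\exp(-2\alpha k_2)\exp\big(\alpha\|Z_2+(X_2'(I-P_R)X_2)^{1/2}\beta_2\|^2/\sigma^2\big)\Big]^{-1}\{D_n\sqrt n Z_2 - B_n\sqrt n\beta_2\},$$ where $$B_n=\begin{bmatrix}(X_1'X_1)^{-1}X_1'X_2\\ -I_{k_2}\end{bmatrix},\quad C_n=\begin{bmatrix}(X_1'X_1)^{-1/2}\\ 0_{k_2\times k_1}\end{bmatrix},\quad D_n=\begin{bmatrix}-(X_1'X_1)^{-1}X_1'X_2(X_2'(I-P_R)X_2)^{-1/2}\\ (X_2'(I-P_R)X_2)^{-1/2}\end{bmatrix},$$ and $Z_1\sim N(0,\sigma^2I_{k_1})$, $Z_2\sim N(0,\sigma^2 I_{k_2})$ are independent.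
   Context: Setup: for each sample size $n$, $Y=X\beta+u$, where $Y$ is $n\times1$, $X$ is a non-stochastic $n\times k$ matrix of full column rank $k$ (so $n\ge k$), $k>1$, and $u\sim N(0,\sigma^2I_n)$ with $0<\sigma^2<\infty$ known. Entries of $Y,X,u$ may depend on $n$. $\mathbb{P}_{n,\beta,\sigma}$ denotes the distribution of $Y$ on $\mathbb{R}^n$. Partition $X=[X_1:X_2]$ and $\beta=(\beta_1',\beta_2')'$ commensurably, with $X_i$ having $k_i\ge1$ columns ($k_1+k_2=k$). The restricted least squares estimator is $\hat\beta(R)=\big(((X_1'X_1)^{-1}X_1'Y)',0_{1\times k_2}\big)'$ and the unrestricted one is $\hat\beta(U)=(X'X)^{-1}X'Y$. For a tuning parameter $\alpha>0$ the model averaging estimator is $\tilde\beta=\hat\lambda\hat\beta(R)+(1-\hat\lambda)\hat\beta(U)$ with $\hat\lambda=\big[1+\exp(-2\alpha k_2)\exp(\alpha\|X\hat\beta(R)-X\hat\beta(U)\|^2/\sigma^2)\big]^{-1}$ ($\|\cdot\|$ Euclidean norm). $P_R=X_1(X_1'X_1)^{-1}X_1'$. For a symmetric positive definite $A$, $A^{1/2}$ is its symmetric positive definite square root and $A^{-1/2}=(A^{1/2})^{-1}$. *)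

theory Defs
  imports "HOL-Analysis.Analysis" "HOL-Probability.Probability"
begin

definition sym_pos_def :: "real^'k^'k \<Rightarrow> bool" where
  "sym_pos_def A \<longleftrightarrow> transpose A = A \<and> (\<forall>x. x \<noteq> 0 \<longrightarrow> x \<bullet> (A *v x) > 0)"

definition matrix_sqrt :: "real^'k^'k \<Rightarrow> real^'k^'k" where
  "matrix_sqrt A = (THE S. sym_pos_def S \<and> S ** S = A)"

definition matrix_sqrt_inv :: "real^'k^'k \<Rightarrow> real^'k^'k" where
  "matrix_sqrt_inv A = matrix_inv (matrix_sqrt A)"

definition Xfst :: "real^('k1::finite+'k2::finite)^'n \<Rightarrow> real^'k1^'n" where
  "Xfst X = (\<chi> i j. X $ i $ Inl j)"

definition Xsnd :: "real^('k1::finite+'k2::finite)^'n \<Rightarrow> real^'k2^'n" where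
  "Xsnd X = (\<chi> i j. X $ i $ Inr j)"

definition vfst :: "real^('k1::finite+'k2::finite) \<Rightarrow> real^'k1" where
  "vfst b = (\<chi> j. b $ Inl j)"

definition vsnd :: "real^('k1::finite+'k2::finite) \<Rightarrow> real^'k2" where
  "vsnd b = (\<chi> j. b $ Inr j)"

definition vjoin :: "real^'k1 \<Rightarrow> real^'k2 \<Rightarrow> real^('k1::finite+'k2::finite)" where
  "vjoin a b = (\<chi> i. case i of Inl j \<Rightarrow> a $ j | Inr j \<Rightarrow> b $ j)"

definition betaR :: "real^('k1::finite+'k2::finite)^'n \<Rightarrow> real^'n \<Rightarrow> real^('k1::finite+'k2::finite)" where
  "betaR X Y = vjoin (matrix_inv (transpose (Xfst X) ** Xfst X) *v (transpose (Xfst X) *v Y))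
                     (0 :: real^'k2)"

definition betaU :: "real^('k1::finite+'k2::finite)^'n \<Rightarrow> real^'n \<Rightarrow> real^('k1::finite+'k2::finite)" where
  "betaU X Y = matrix_inv (transpose X ** X) *v (transpose X *v Y)"

definition lambda_hat :: "real \<Rightarrow> real \<Rightarrow> real^('k1::finite+'k2::finite)^'n \<Rightarrow> real^'n \<Rightarrow> real" where
  "lambda_hat \<alpha> \<sigma> X Y =
     1 / (1 + exp (- 2 * \<alpha> * real CARD('k2))
            * exp (\<alpha> * (norm (X *v betaR X Y - X *v betaU X Y))\<^sup>2 / \<sigma>\<^sup>2))"

definition beta_tilde :: "real \<Rightarrow> real \<Rightarrow> real^('k1::finite+'k2::finite)^'n \<Rightarrow> real^'n \<Rightarrow> real^('k1::finite+'k2::finite)" where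
  "beta_tilde \<alpha> \<sigma> X Y =
     lambda_hat \<alpha> \<sigma> X Y *\<^sub>R betaR X Y + (1 - lambda_hat \<alpha> \<sigma> X Y) *\<^sub>R betaU X Y"

definition proj_R :: "real^('k1::finite+'k2::finite)^'n \<Rightarrow> real^'n^'n" where
  "proj_R X = Xfst X ** matrix_inv (transpose (Xfst X) ** Xfst X) ** transpose (Xfst X)"

definition M22 :: "real^('k1::finite+'k2::finite)^'n \<Rightarrow> real^'k2^'k2" where
  "M22 X = transpose (Xsnd X) ** (mat 1 - proj_R X) ** Xsnd X"

definition G12 :: "real^('k1::finite+'k2::finite)^'n \<Rightarrow> real^'k2^'k1" where
  "G12 X = matrix_inv (transpose (Xfst X) ** Xfst X) ** transpose (Xfst X) ** Xsnd X"

definition Bn :: "real^('k1::finite+'k2::finite)^'n \<Rightarrow> real^'k2^('k1::finite+'k2::finite)" where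
  "Bn X = (\<chi> i. case i of Inl j \<Rightarrow> G12 X $ j | Inr j \<Rightarrow> - (mat 1 $ j))"

definition Cn :: "real^('k1::finite+'k2::finite)^'n \<Rightarrow> real^'k1^('k1::finite+'k2::finite)" where
  "Cn X = (\<chi> i. case i of Inl j \<Rightarrow> matrix_sqrt_inv (transpose (Xfst X) ** Xfst X) $ j
                         | Inr j \<Rightarrow> 0)"

definition Dn :: "real^('k1::finite+'k2::finite)^'n \<Rightarrow> real^'k2^('k1::finite+'k2::finite)" where
  "Dn X = (\<chi> i. case i of Inl j \<Rightarrow> (- (G12 X ** matrix_sqrt_inv (M22 X))) $ j
                         | Inr j \<Rightarrow> matrix_sqrt_inv (M22 X) $ j)"

text \<open>N(0, sigma^2 I): independent centred normal components with standard deviation sigma.\<close>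
definition gauss_vec :: "real \<Rightarrow> (real^'a) measure" where
  "gauss_vec \<sigma> = density lborel (\<lambda>z. \<Prod>i\<in>UNIV. normal_density 0 \<sigma> (z $ i))"

definition model_dist :: "real^('k1::finite+'k2::finite)^'n \<Rightarrow> real^('k1::finite+'k2::finite) \<Rightarrow> real \<Rightarrow> (real^'n) measure" where
  "model_dist X \<beta> \<sigma> = distr (gauss_vec \<sigma>) borel (\<lambda>u. X *v \<beta> + u)"

end

theory Submission
  imports Defs
begin


typedef 'a wo = "UNIV :: 'a set" morphisms rep_wo abs_wo by auto

instance wo :: (finite) finite
proof
  have "(UNIV :: 'a wo set) = abs_wo ` UNIV"
    by (metis rep_wo_inverse surj_def)
  moreover have "finite (abs_wo ` (UNIV :: 'a set))" by simp
  ultimately show "finite (UNIV :: 'a wo set)" by simp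
qed

definition enc :: "'a::finite \<Rightarrow> nat" where "enc = (SOME f. inj f)"

lemma enc_inj: "inj (enc :: 'a::finite \<Rightarrow> nat)"
proof -
  obtain f :: "'a \<Rightarrow> nat" and n where "inj_on f UNIV"
    using finite_imp_inj_to_nat_seg[of "UNIV :: 'a set"] by auto
  then have "\<exists>f :: 'a \<Rightarrow> nat. inj f" by blast
  then show ?thesis unfolding enc_def by (rule someI_ex)
qed

instantiation wo :: (finite) linorder
begin
definition less_eq_wo :: "'a wo \<Rightarrow> 'a wo \<Rightarrow> bool" where "less_eq_wo x y \<longleftrightarrow> enc (rep_wo x) \<le> enc (rep_wo y)"
definition less_wo :: "'a wo \<Rightarrow> 'a wo \<Rightarrow> bool" where "less_wo x y \<longleftrightarrow> enc (rep_wo x) < enc (rep_wo y)"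
instance
proof
  fix x y z :: "'a wo"
  show "(x < y) = (x \<le> y \<and> \<not> y \<le> x)" by (auto simp: less_eq_wo_def less_wo_def)
  show "x \<le> x" by (simp add: less_eq_wo_def)
  show "x \<le> y \<Longrightarrow> y \<le> z \<Longrightarrow> x \<le> z" by (simp add: less_eq_wo_def)
  show "x \<le> y \<Longrightarrow> y \<le> x \<Longrightarrow> x = y"
    using enc_inj[where 'a='a] by (simp add: less_eq_wo_def inj_eq rep_wo_inject)
  show "x \<le> y \<or> y \<le> x" by (auto simp: less_eq_wo_def)
qed
end

instance wo :: (finite) wellorder
proof
  fix P :: "'a wo \<Rightarrow> bool" and a
  assume h: "\<And>x. (\<And>y. y < x \<Longrightarrow> P y) \<Longrightarrow> P x"
  show "P a"
  proof (induction "enc (rep_wo a)" arbitrary: a rule: less_induct)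
    case less
    then show ?case using h by (auto simp: less_wo_def)
  qed
qed

lemma lborel_orth_wo:
  fixes T :: "real^'m::{finite,wellorder} \<Rightarrow> real^'m::_"
  assumes T: "orthogonal_transformation T"
  shows "distr lborel borel T = lborel"
proof (rule lborel_eqI[symmetric])
  show "sets (distr lborel borel T) = sets borel" by simp
  fix l u :: "real^'m::_" assume lu: "\<And>b. b \<in> Basis \<Longrightarrow> l \<bullet> b \<le> u \<bullet> b"
  have lin: "linear T" using T by (simp add: orthogonal_transformation_linear)
  have Tm: "T \<in> borel_measurable borel"
    using lin by (intro borel_measurable_continuous_onI linear_continuous_on) (simp add: linear_conv_bounded_linear)
  have bij: "bij T" using T by (rule orthogonal_transformation_bij)
  have Ti: "orthogonal_transformation (inv T)" using T by (rule orthogonal_transformation_inv)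
  have pre: "T -` box l u = inv T ` box l u"
    using bij by (auto simp: bij_def surj_f_inv_f inv_f_f image_iff) (metis bij bij_inv_eq_iff)
  have meas: "T -` box l u \<in> sets borel" using Tm by (simp add: measurable_sets_borel)
  have "emeasure (distr lborel borel T) (box l u) = emeasure lborel (T -` box l u)"
    using Tm by (simp add: emeasure_distr)
  also have "\<dots> = emeasure lebesgue (T -` box l u)"
    using meas by (simp add: sets_completionI_sets)
  also have "\<dots> = ennreal (measure lebesgue (inv T ` box l u))"
    using measurable_orthogonal_image[OF Ti lmeasurable_box] pre by (simp add: emeasure_eq_measure2)
  also have "\<dots> = ennreal (measure lebesgue (box l u))"
    using measure_orthogonal_image[OF Ti lmeasurable_box] by simp
  also have "\<dots> = emeasure lebesgue (box l u)"
    using lmeasurable_box by (simp add: emeasure_eq_measure2)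
  also have "\<dots> = emeasure lborel (box l u)"
    by (simp add: sets_completionI_sets)
  also have "\<dots> = (\<Prod>b\<in>Basis. (u - l) \<bullet> b)" using lu by simp
  finally show "emeasure (distr lborel borel T) (box l u) = (\<Prod>b\<in>Basis. (u - l) \<bullet> b)" .
qed


lemma lin_meas:
  fixes f :: "'a::euclidean_space \<Rightarrow> 'b::euclidean_space"
  assumes "linear f" shows "f \<in> borel_measurable borel"
proof -
  have "bounded_linear f" using assms by (simp add: linear_conv_bounded_linear)
  then have "continuous_on UNIV f" by (rule linear_continuous_on)
  then show ?thesis by (rule borel_measurable_continuous_onI)
qed

lemma sum_Basis_inner:
  fixes b :: "'a::euclidean_space"
  assumes "b \<in> Basis"
  shows "(\<Sum>c\<in>Basis. f c *\<^sub>R c) \<bullet> b = f b"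
  using assms by (simp add: inner_sum_left inner_Basis if_distrib[where f="\<lambda>x. _ * x"] cong: if_cong)

lemma distr_lborel_iso:
  fixes J :: "'b::euclidean_space \<Rightarrow> 'a::euclidean_space"
  assumes lin: "linear J" and iso: "\<And>x y. J x \<bullet> J y = x \<bullet> y" and B: "J ` Basis = Basis"
  shows "distr lborel borel J = lborel"
proof (rule lborel_eqI[symmetric])
  show "sets (distr lborel borel J) = sets borel" by simp
  fix l u :: 'a assume lu: "\<And>b. b \<in> Basis \<Longrightarrow> l \<bullet> b \<le> u \<bullet> b"
  define Jt where "Jt y = (\<Sum>b\<in>Basis. (y \<bullet> J b) *\<^sub>R b)" for y
  have Jt: "Jt y \<bullet> b = y \<bullet> J b" if "b \<in> Basis" for y b
    unfolding Jt_def using sum_Basis_inner[OF that] .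
  have allB: "(\<forall>c\<in>Basis. P c) \<longleftrightarrow> (\<forall>b\<in>Basis. P (J b))" for P :: "'a \<Rightarrow> bool"
    by (subst B[symmetric]) simp
  have pre: "J -` box l u = box (Jt l) (Jt u)"
  proof -
    have "x \<in> J -` box l u \<longleftrightarrow> x \<in> box (Jt l) (Jt u)" for x
    proof -
      have "x \<in> J -` box l u \<longleftrightarrow> (\<forall>c\<in>Basis. l \<bullet> c < J x \<bullet> c \<and> J x \<bullet> c < u \<bullet> c)"
        by (simp add: box_def)
      also have "\<dots> \<longleftrightarrow> (\<forall>b\<in>Basis. l \<bullet> J b < J x \<bullet> J b \<and> J x \<bullet> J b < u \<bullet> J b)"
        by (rule allB)
      also have "\<dots> \<longleftrightarrow> x \<in> box (Jt l) (Jt u)"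
        by (simp add: box_def iso Jt)
      finally show ?thesis .
    qed
    then show ?thesis by blast
  qed
  have injB: "inj_on J Basis"
  proof (rule inj_onI)
    fix a b :: 'b assume ab: "a \<in> Basis" "b \<in> Basis" "J a = J b"
    then have "a \<bullet> b = 1" using iso[of a b] iso[of b b] by simp
    then show "a = b" using ab by (metis inner_Basis zero_neq_one)
  qed
  have "emeasure (distr lborel borel J) (box l u) = emeasure lborel (J -` box l u)"
    using lin_meas[OF lin] by (simp add: emeasure_distr)
  also have "\<dots> = (\<Prod>b\<in>Basis. (Jt u - Jt l) \<bullet> b)"
    unfolding pre
    by (rule emeasure_lborel_box) (simp add: Jt lu B[symmetric] image_eqI)
  also have "\<dots> = (\<Prod>b\<in>Basis. (u - l) \<bullet> J b)"
    by (rule arg_cong[where f=ennreal], rule prod.cong) (simp_all add: inner_diff_left Jt)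
  also have "\<dots> = (\<Prod>c\<in>J ` Basis. (u - l) \<bullet> c)"
    by (simp add: prod.reindex[OF injB])
  also have "\<dots> = (\<Prod>c\<in>Basis. (u - l) \<bullet> c)" by (simp add: B)
  finally show "emeasure (distr lborel borel J) (box l u) = (\<Prod>b\<in>Basis. (u - l) \<bullet> b)" .
qed

lemma lborel_orth_transfer:
  fixes J :: "'b::euclidean_space \<Rightarrow> 'a::euclidean_space" and Ji :: "'a \<Rightarrow> 'b" and T :: "'a \<Rightarrow> 'a"
  assumes linJ: "linear J" and isoJ: "\<And>x y. J x \<bullet> J y = x \<bullet> y" and B: "J ` Basis = Basis"
    and linJi: "linear Ji" and JJi: "\<And>y. J (Ji y) = y"
    and H: "\<And>T' :: 'b \<Rightarrow> 'b. orthogonal_transformation T' \<Longrightarrow> distr lborel borel T' = lborel"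
    and T: "orthogonal_transformation T"
  shows "distr lborel borel T = lborel"
proof -
  define T' where "T' = Ji \<circ> T \<circ> J"
  have linT: "linear T" using T by (simp add: orthogonal_transformation_linear)
  have isoJi: "Ji a \<bullet> Ji b = a \<bullet> b" for a b using isoJ[of "Ji a" "Ji b"] by (simp add: JJi)
  have "orthogonal_transformation T'"
    unfolding orthogonal_transformation_def T'_def
    using T by (auto simp: isoJi isoJ orthogonal_transformation_def
        intro!: linear_compose[OF linJ linear_compose[OF linT linJi]])
  then have HT: "distr lborel borel T' = lborel" by (rule H)
  have JT: "J \<circ> T' = T \<circ> J" by (simp add: T'_def fun_eq_iff JJi)
  have mJ: "J \<in> borel_measurable borel" by (rule lin_meas[OF linJ])
  have mT: "T \<in> borel_measurable borel" by (rule lin_meas[OF linT])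
  have mT': "T' \<in> borel_measurable borel"
    unfolding T'_def by (intro lin_meas linear_compose[OF linJ linear_compose[OF linT linJi]])
  have LJ: "distr lborel borel J = lborel" by (rule distr_lborel_iso[OF linJ isoJ B])
  have "distr lborel borel T = distr (distr lborel borel J) borel T" by (simp add: LJ)
  also have "\<dots> = distr lborel borel (T \<circ> J)" using mJ mT by (simp add: distr_distr)
  also have "\<dots> = distr lborel borel (J \<circ> T')" by (simp add: JT)
  also have "\<dots> = distr (distr lborel borel T') borel J" using mJ mT' by (simp add: distr_distr)
  also have "\<dots> = lborel" by (simp add: HT LJ)
  finally show ?thesis .
qed


lemma sum_UNIV_plus':
  fixes f :: "('a::finite + 'b::finite) \<Rightarrow> 'c::comm_monoid_add"
  shows "(\<Sum>i\<in>UNIV. f i) = (\<Sum>j\<in>UNIV. f (Inl j)) + (\<Sum>j\<in>UNIV. f (Inr j))"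
proof -
  have "sum f (UNIV <+> UNIV) = sum (f \<circ> Inl) UNIV + sum (f \<circ> Inr) UNIV" by (rule sum.Plus) auto
  then show ?thesis by (simp add: UNIV_Plus_UNIV)
qed

lemma abs_wo_inj[simp]: "abs_wo a = abs_wo b \<longleftrightarrow> a = b"
  by (simp add: abs_wo_inject)

lemma sum_wo: "(\<Sum>k\<in>(UNIV :: 'a::finite wo set). f k) = (\<Sum>j\<in>UNIV. f (abs_wo j))"
proof -
  have "(UNIV :: 'a wo set) = abs_wo ` UNIV" by (metis rep_wo_inverse surj_def)
  moreover have "inj (abs_wo :: 'a \<Rightarrow> 'a wo)" by (simp add: inj_def)
  then have "sum f (range abs_wo) = sum (f \<circ> abs_wo) UNIV" by (rule sum.reindex)
  with \<open>UNIV = range abs_wo\<close> show ?thesis by simp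
qed

type_synonym ('n, 'k1, 'k2) bigE = "(real^'n) \<times> ((real^'k1) \<times> (real^'k2))"

definition Jm :: "(real, ('n::finite + ('k1::finite + 'k2::finite)) wo) vec \<Rightarrow> ('n, 'k1, 'k2) bigE" where
  "Jm v = ((\<chi> i. v $ abs_wo (Inl i)), ((\<chi> i. v $ abs_wo (Inr (Inl i))), (\<chi> i. v $ abs_wo (Inr (Inr i)))))"

definition Jmi :: "('n::finite, 'k1::finite, 'k2::finite) bigE \<Rightarrow> (real, ('n + ('k1 + 'k2)) wo) vec" where
  "Jmi p = (\<chi> k. case rep_wo k of Inl i \<Rightarrow> fst p $ i | Inr (Inl i) \<Rightarrow> fst (snd p) $ i | Inr (Inr i) \<Rightarrow> snd (snd p) $ i)"

lemma Jm_Jmi: "Jm (Jmi p) = p"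
  by (cases p) (auto simp: Jm_def Jmi_def vec_eq_iff abs_wo_inverse)

lemma Jm_linear: "linear Jm"
  by (intro linearI) (simp_all add: Jm_def vec_eq_iff)

lemma Jmi_linear: "linear Jmi"
  by (intro linearI) (simp_all add: Jmi_def vec_eq_iff split: sum.split)

lemma Jm_iso: "Jm x \<bullet> Jm y = x \<bullet> y"
  by (simp add: Jm_def inner_vec_def sum_wo sum_UNIV_plus' add.assoc)

lemma Basis_vec_real: "(Basis :: (real^'m) set) = range (\<lambda>k. axis k 1)"
  by (auto simp: Basis_vec_def)

lemma Jm_axis: "Jm (axis (abs_wo j) 1) = (case j of Inl i \<Rightarrow> (axis i 1, 0, 0)
   | Inr (Inl i) \<Rightarrow> (0, axis i 1, 0) | Inr (Inr i) \<Rightarrow> (0, 0, axis i 1))"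
  by (auto simp: Jm_def axis_def vec_eq_iff split: sum.split)

lemma Jm_Basis: "Jm ` (Basis :: (real, ('n::finite + ('k1::finite + 'k2::finite)) wo) vec set) = Basis"
proof -
  have "Jm ` (Basis :: (real, ('n + ('k1 + 'k2)) wo) vec set) = (\<lambda>j. Jm (axis (abs_wo j) 1)) ` UNIV"
    by (auto simp: Basis_vec_real image_iff) (metis rep_wo_inverse)
  also have "\<dots> = Basis"
  proof (intro set_eqI iffI)
    fix x assume "x \<in> (\<lambda>j. Jm (axis (abs_wo j) 1)) ` (UNIV :: ('n + ('k1 + 'k2)) set)"
    then obtain j :: "'n + ('k1 + 'k2)" where x: "x = Jm (axis (abs_wo j) 1)" by blast
    show "x \<in> Basis"
    proof (cases j)
      case (Inl i) then show ?thesis by (simp add: x Jm_axis Basis_prod_def Basis_vec_real image_iff zero_prod_def) blast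
    next
      case (Inr r) then show ?thesis
        by (cases r) (simp_all add: x Jm_axis Basis_prod_def Basis_vec_real)
    qed
  next
    fix x :: "('n, 'k1, 'k2) bigE" assume "x \<in> Basis"
    then consider (a) i where "x = (axis i 1, 0, 0)" | (b) i where "x = (0, axis i 1, 0)"
      | (c) i where "x = (0, 0, axis i 1)"
      by (auto simp: Basis_prod_def Basis_vec_real zero_prod_def)
    then show "x \<in> (\<lambda>j. Jm (axis (abs_wo j) 1)) ` UNIV"
    proof cases
      case a then show ?thesis by (intro image_eqI[where x="Inl i"]) (simp_all add: Jm_axis)
    next
      case b then show ?thesis by (intro image_eqI[where x="Inr (Inl i)"]) (simp_all add: Jm_axis)
    next
      case c then show ?thesis by (intro image_eqI[where x="Inr (Inr i)"]) (simp_all add: Jm_axis)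
    qed
  qed
  finally show ?thesis .
qed

lemma lborel_orth_E:
  fixes T :: "('n::finite, 'k1::finite, 'k2::finite) bigE \<Rightarrow> ('n, 'k1, 'k2) bigE"
  assumes T: "orthogonal_transformation T"
  shows "distr lborel borel T = lborel"
  by (rule lborel_orth_transfer[OF Jm_linear Jm_iso Jm_Basis Jmi_linear Jm_Jmi lborel_orth_wo T])


definition gd :: "real \<Rightarrow> nat \<Rightarrow> 'a::real_normed_vector \<Rightarrow> ennreal" where
  "gd \<sigma> m x = ennreal ((1 / sqrt (2 * pi * \<sigma>\<^sup>2)) ^ m * exp (- (norm x)\<^sup>2 / (2 * \<sigma>\<^sup>2)))"

lemma gd_meas[measurable]: "gd \<sigma> m \<in> borel_measurable borel"
  unfolding gd_def by measurable

lemma prod_normal_density: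
  fixes x :: "real^'a"
  shows "(\<Prod>i\<in>UNIV. normal_density 0 \<sigma> (x $ i)) =
    (1 / sqrt (2 * pi * \<sigma>\<^sup>2)) ^ CARD('a) * exp (- (norm x)\<^sup>2 / (2 * \<sigma>\<^sup>2))"
proof -
  have "(norm x)\<^sup>2 = x \<bullet> x" by (rule power2_norm_eq_inner)
  also have "\<dots> = (\<Sum>i\<in>UNIV. (x $ i)\<^sup>2)" by (simp add: inner_vec_def power2_eq_square)
  finally have "(norm x)\<^sup>2 = (\<Sum>i\<in>UNIV. (x $ i)\<^sup>2)" .
  then have "exp (- (norm x)\<^sup>2 / (2 * \<sigma>\<^sup>2)) = (\<Prod>i\<in>UNIV. exp (- (x $ i)\<^sup>2 / (2 * \<sigma>\<^sup>2)))"
    by (simp add: exp_sum[symmetric] sum_negf sum_divide_distrib)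
  have "(\<Prod>i\<in>UNIV. normal_density 0 \<sigma> (x $ i))
      = (\<Prod>i\<in>UNIV. (1 / sqrt (2 * pi * \<sigma>\<^sup>2)) * exp (- (x $ i)\<^sup>2 / (2 * \<sigma>\<^sup>2)))"
    by (rule prod.cong) (simp_all add: normal_density_def)
  also have "\<dots> = (1 / sqrt (2 * pi * \<sigma>\<^sup>2)) ^ CARD('a) * (\<Prod>i\<in>UNIV. exp (- (x $ i)\<^sup>2 / (2 * \<sigma>\<^sup>2)))"
    by (simp only: prod.distrib prod_constant)
  finally show ?thesis using \<open>exp (- (norm x)\<^sup>2 / (2 * \<sigma>\<^sup>2)) = _\<close> by simp
qed

lemma gauss_vec_gd: "(gauss_vec \<sigma> :: (real^'a) measure) = density lborel (gd \<sigma> CARD('a))"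
  unfolding gauss_vec_def gd_def by (simp add: prod_normal_density)

lemma gauss_vec_prob:
  assumes sp: "\<sigma> > 0"
  shows "prob_space (gauss_vec \<sigma> :: (real^'a) measure)"
proof
  have "emeasure (gauss_vec \<sigma> :: (real^'a) measure) (space (gauss_vec \<sigma>))
      = (\<integral>\<^sup>+x. (\<Prod>i\<in>UNIV. ennreal (normal_density 0 \<sigma> (x $ i))) \<partial>(lborel :: (real^'a) measure))"
    unfolding gauss_vec_def
    by (simp add: emeasure_density prod_ennreal normal_density_nonneg)
  also have "\<dots> = (\<integral>\<^sup>+x. (\<Prod>b\<in>(Basis :: (real^'a) set). ennreal (normal_density 0 \<sigma> (x \<bullet> b))) \<partial>(lborel :: (real^'a) measure))"
  proof -
    have inj: "inj (\<lambda>i::'a. axis i (1::real))" by (auto simp: inj_def axis_eq_axis)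
    have "(\<Prod>b\<in>(Basis :: (real^'a) set). ennreal (normal_density 0 \<sigma> (x \<bullet> b)))
        = (\<Prod>i\<in>UNIV. ennreal (normal_density 0 \<sigma> (x $ i)))" for x :: "real^'a"
      by (simp add: Basis_vec_real prod.reindex[OF inj] inner_axis)
    then show ?thesis by simp
  qed
  also have "\<dots> = (\<Prod>b\<in>(Basis :: (real^'a) set). (\<integral>\<^sup>+x. ennreal (normal_density 0 \<sigma> x) \<partial>lborel))"
    by (rule nn_integral_lborel_prod) auto
  also have "(\<integral>\<^sup>+x. ennreal (normal_density 0 \<sigma> x) \<partial>lborel) = 1"
    by (subst nn_integral_eq_integral) (auto simp: integrable_normal_density[OF sp] integral_normal_density[OF sp])
  finally show "emeasure (gauss_vec \<sigma> :: (real^'a) measure) (space (gauss_vec \<sigma>)) = 1" by simp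
qed

lemma gd_prod:
  fixes x :: "'a::real_normed_vector" and y :: "'b::real_normed_vector"
  assumes "\<sigma> > 0"
  shows "gd \<sigma> m1 x * gd \<sigma> m2 y = gd \<sigma> (m1 + m2) (x, y)"
proof -
  define c where "c = 1 / sqrt (2 * pi * \<sigma>\<^sup>2)"
  have c0: "c \<ge> 0" by (simp add: c_def)
  have n: "(norm (x, y))\<^sup>2 = (norm x)\<^sup>2 + (norm y)\<^sup>2" by (simp add: norm_Pair)
  have r: "(c ^ m1 * exp (- (norm x)\<^sup>2 / (2 * \<sigma>\<^sup>2))) * (c ^ m2 * exp (- (norm y)\<^sup>2 / (2 * \<sigma>\<^sup>2)))
      = c ^ (m1 + m2) * exp (- (norm (x, y))\<^sup>2 / (2 * \<sigma>\<^sup>2))"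
  proof -
    have "- ((norm x)\<^sup>2 + (norm y)\<^sup>2) / (2 * \<sigma>\<^sup>2) = - (norm x)\<^sup>2 / (2 * \<sigma>\<^sup>2) + - (norm y)\<^sup>2 / (2 * \<sigma>\<^sup>2)"
      by (simp add: minus_add_distrib add_divide_distrib diff_divide_distrib)
    then have E: "exp (- (norm (x, y))\<^sup>2 / (2 * \<sigma>\<^sup>2)) = exp (- (norm x)\<^sup>2 / (2 * \<sigma>\<^sup>2)) * exp (- (norm y)\<^sup>2 / (2 * \<sigma>\<^sup>2))"
      unfolding n by (simp only: exp_add)
    show ?thesis by (subst E) (simp add: power_add mult_ac)
  qed
  have "gd \<sigma> m1 x * gd \<sigma> m2 y = ennreal ((c ^ m1 * exp (- (norm x)\<^sup>2 / (2 * \<sigma>\<^sup>2))) * (c ^ m2 * exp (- (norm y)\<^sup>2 / (2 * \<sigma>\<^sup>2))))"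
    unfolding gd_def c_def[symmetric] by (rule ennreal_mult[symmetric]) (simp_all add: c0)
  also have "\<dots> = gd \<sigma> (m1 + m2) (x, y)" unfolding gd_def c_def[symmetric] r ..
  finally show ?thesis .
qed

lemma gd_pair:
  fixes \<sigma> :: real
  assumes "\<sigma> > 0"
    and P1: "prob_space (density lborel (gd \<sigma> m1 :: 'a::euclidean_space \<Rightarrow> ennreal))"
    and P2: "prob_space (density lborel (gd \<sigma> m2 :: 'b::euclidean_space \<Rightarrow> ennreal))"
  shows "density lborel (gd \<sigma> m1) \<Otimes>\<^sub>M density lborel (gd \<sigma> m2) = density lborel (gd \<sigma> (m1 + m2) :: 'a \<times> 'b \<Rightarrow> ennreal)"
proof -
  have sf: "sigma_finite_measure (density lborel (gd \<sigma> m2 :: 'b \<Rightarrow> ennreal))"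
    using P2 by (simp add: prob_space_imp_sigma_finite)
  have "density lborel (gd \<sigma> m1) \<Otimes>\<^sub>M density lborel (gd \<sigma> m2)
      = density (lborel \<Otimes>\<^sub>M lborel) (\<lambda>(x :: 'a, y :: 'b). gd \<sigma> m1 x * gd \<sigma> m2 y)"
    by (rule pair_measure_density) (auto simp: sf lborel.sigma_finite_measure_axioms)
  also have "\<dots> = density lborel (gd \<sigma> (m1 + m2))"
    by (simp add: lborel_prod gd_prod[OF assms(1)] case_prod_beta')
  finally show ?thesis .
qed

lemma gd_orth_invariant:
  fixes T :: "'a::euclidean_space \<Rightarrow> 'a"
  assumes T: "orthogonal_transformation T" and L: "distr lborel borel T = lborel"
  shows "distr (density lborel (gd \<sigma> m)) borel T = density lborel (gd \<sigma> m)"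
proof -
  have mT: "T \<in> borel_measurable borel" using T by (simp add: lin_meas orthogonal_transformation_linear)
  have gT: "gd \<sigma> m (T x) = gd \<sigma> m x" for x
    using T by (simp add: gd_def orthogonal_transformation_norm)
  have gT': "(\<lambda>x. gd \<sigma> m (T x)) = gd \<sigma> m" by (rule ext) (rule gT)
  have X: "density (distr lborel borel T) (gd \<sigma> m) = distr (density lborel (\<lambda>x. gd \<sigma> m (T x))) borel T"
    by (rule density_distr) (auto simp: mT)
  show ?thesis using X unfolding L gT' by (rule sym)
qed

lemma distr_pair_snd':
  assumes "prob_space M" "prob_space N"
  shows "distr (M \<Otimes>\<^sub>M N) N snd = N"
proof (intro measure_eqI)
  interpret N: prob_space N by fact
  interpret M: prob_space M by fact
  fix A assume A: "A \<in> sets (distr (M \<Otimes>\<^sub>M N) N snd)"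
  then have "emeasure (distr (M \<Otimes>\<^sub>M N) N snd) A = emeasure (M \<Otimes>\<^sub>M N) (space M \<times> A)"
    by (auto simp add: emeasure_distr space_pair_measure dest: sets.sets_into_space intro!: arg_cong2[where f=emeasure])
  with A show "emeasure (distr (M \<Otimes>\<^sub>M N) N snd) A = emeasure N A"
    by (simp add: N.emeasure_pair_measure_Times M.emeasure_space_1)
qed simp


declare transpose_matrix_vector[simp del]

lemma mv_adj2: "(A *v x) \<bullet> y = x \<bullet> (transpose A *v y)"
  for A :: "real^'n^'m"
  by (metis transpose_matrix_vector dot_lmul_matrix inner_commute)

lemma gauss_proj:
  fixes Q1 :: "real^'n^'k1" and Q2 :: "real^'n^'k2" and \<sigma> :: real
  assumes sp: "\<sigma> > 0" and h1: "Q1 ** transpose Q1 = mat 1" and h2: "Q2 ** transpose Q2 = mat 1"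
    and h12: "Q1 ** transpose Q2 = 0"
  shows "distr (gauss_vec \<sigma> :: (real^'n) measure) (gauss_vec \<sigma> \<Otimes>\<^sub>M gauss_vec \<sigma>) (\<lambda>u. (Q1 *v u, Q2 *v u))
    = (gauss_vec \<sigma> :: (real^'k1) measure) \<Otimes>\<^sub>M (gauss_vec \<sigma> :: (real^'k2) measure)"
proof -
  define Gn :: "(real^'n) measure" where "Gn = gauss_vec \<sigma>"
  define G1 :: "(real^'k1) measure" where "G1 = gauss_vec \<sigma>"
  define G2 :: "(real^'k2) measure" where "G2 = gauss_vec \<sigma>"
  define GK where "GK = G1 \<Otimes>\<^sub>M G2"
  define NE where "NE = Gn \<Otimes>\<^sub>M GK"
  have PGn: "prob_space Gn" and PG1: "prob_space G1" and PG2: "prob_space G2"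
    unfolding Gn_def G1_def G2_def using gauss_vec_prob[OF sp] by auto
  have PGK: "prob_space GK" unfolding GK_def by (rule prob_space_pair[OF PG1 PG2])
  have dGn: "Gn = density lborel (gd \<sigma> CARD('n))" and dG1: "G1 = density lborel (gd \<sigma> CARD('k1))"
    and dG2: "G2 = density lborel (gd \<sigma> CARD('k2))"
    unfolding Gn_def G1_def G2_def by (simp_all add: gauss_vec_gd)
  have dGK: "GK = density lborel (gd \<sigma> (CARD('k1) + CARD('k2)))"
    unfolding GK_def dG1 dG2 by (rule gd_pair[OF sp]) (use PG1 PG2 dG1 dG2 in auto)
  have dNE: "NE = density lborel (gd \<sigma> (CARD('n) + (CARD('k1) + CARD('k2))))"
    unfolding NE_def dGn dGK by (rule gd_pair[OF sp]) (use PGn PGK dGn dGK in auto)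
  have sNE: "sets NE = sets borel" by (simp add: dNE)
  have sGn: "sets Gn = sets borel" by (simp add: dGn)
  have sG1: "sets G1 = sets borel" by (simp add: dG1)
  have sG2: "sets G2 = sets borel" by (simp add: dG2)
  have a1: "Q1 *v (transpose Q1 *v w) = w" for w by (simp add: matrix_vector_mul_assoc h1)
  have a2: "Q2 *v (transpose Q2 *v w) = w" for w by (simp add: matrix_vector_mul_assoc h2)
  have a12: "Q1 *v (transpose Q2 *v w) = 0" for w by (simp add: matrix_vector_mul_assoc h12)
  have h21: "Q2 ** transpose Q1 = 0"
  proof -
    have "Q2 ** transpose Q1 = transpose (Q1 ** transpose Q2)" by (simp add: matrix_transpose_mul)
    also have "\<dots> = 0" by (simp only: h12) (simp add: vec_eq_iff transpose_def)
    finally show ?thesis .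
  qed
  have a21: "Q2 *v (transpose Q1 *v w) = 0" for w by (simp add: matrix_vector_mul_assoc h21)
  have adjL: "(transpose Q *v x) \<bullet> y = x \<bullet> (Q *v y)" for Q :: "real^'n^'m" and x y
    using mv_adj2[of "transpose Q" x y] by simp
  have adjR: "x \<bullet> (transpose Q *v y) = (Q *v x) \<bullet> y" for Q :: "real^'n^'m" and x y
    using mv_adj2[of Q x y] by simp
  define R :: "('n, 'k1, 'k2) bigE \<Rightarrow> ('n, 'k1, 'k2) bigE" where
    "R p = (fst p - transpose Q1 *v (Q1 *v fst p) - transpose Q2 *v (Q2 *v fst p)
            + transpose Q1 *v fst (snd p) + transpose Q2 *v snd (snd p), Q1 *v fst p, Q2 *v fst p)" for p
  have linR: "linear R"
    by (intro linearI) (simp_all add: R_def vec.add vec.diff matrix_vector_mult_scaleR algebra_simps)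
  have innR: "R p \<bullet> R p = p \<bullet> p" for p
  proof -
    obtain u w1 w2 where p: "p = (u, w1, w2)" by (cases p) auto
    show ?thesis
      by (simp add: p R_def inner_add_left inner_add_right inner_diff_left inner_diff_right
          adjL adjR a1 a2 a12 a21 inner_commute algebra_simps)
  qed
  have orthR: "orthogonal_transformation R"
    unfolding orthogonal_transformation using linR innR by (simp add: norm_eq_sqrt_inner)
  have invNE: "distr NE borel R = NE"
    unfolding dNE by (rule gd_orth_invariant[OF orthR lborel_orth_E[OF orthR]])
  have mRb: "R \<in> borel_measurable borel" by (rule lin_meas[OF linR])
  have mR: "R \<in> measurable NE NE" using mRb by (simp add: measurable_cong_sets[OF sNE sNE])
  have invNE': "distr NE NE R = NE"
    using invNE by (metis distr_cong sNE)
  have msnd: "snd \<in> measurable NE GK" unfolding NE_def by (rule measurable_snd)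
  have mfst: "fst \<in> measurable NE Gn" unfolding NE_def by (rule measurable_fst)
  have mQ1: "(\<lambda>u. Q1 *v u) \<in> measurable Gn G1"
    using lin_meas[OF matrix_vector_mul_linear[of Q1]] by (simp add: measurable_cong_sets[OF sGn sG1])
  have mQ2: "(\<lambda>u. Q2 *v u) \<in> measurable Gn G2"
    using lin_meas[OF matrix_vector_mul_linear[of Q2]] by (simp add: measurable_cong_sets[OF sGn sG2])
  have mL: "(\<lambda>u. (Q1 *v u, Q2 *v u)) \<in> measurable Gn GK"
    unfolding GK_def by (rule measurable_Pair[OF mQ1 mQ2])
  have "distr Gn GK (\<lambda>u. (Q1 *v u, Q2 *v u)) = distr (distr NE Gn fst) GK (\<lambda>u. (Q1 *v u, Q2 *v u))"
    unfolding NE_def by (simp add: prob_space.distr_pair_fst[OF PGK])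
  also have "\<dots> = distr NE GK ((\<lambda>u. (Q1 *v u, Q2 *v u)) \<circ> fst)"
    by (rule distr_distr[OF mL mfst])
  also have "(\<lambda>u. (Q1 *v u, Q2 *v u)) \<circ> fst = snd \<circ> R"
    by (simp add: fun_eq_iff R_def)
  also have "distr NE GK (snd \<circ> R) = distr (distr NE NE R) GK snd"
    by (rule distr_distr[OF msnd mR, symmetric])
  also have "\<dots> = distr NE GK snd" by (simp add: invNE')
  also have "\<dots> = GK" unfolding NE_def by (rule distr_pair_snd'[OF PGn PGK])
  finally show ?thesis by (simp add: Gn_def GK_def G1_def G2_def)
qed


declare transpose_matrix_vector[simp]


lemma mv_adj: "(A *v x) \<bullet> y = x \<bullet> (transpose A *v y)"
  for A :: "real^'n^'m"
  by (metis transpose_matrix_vector dot_lmul_matrix inner_commute)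

lemma sym_adj: "transpose A = A \<Longrightarrow> (A *v x) \<bullet> y = x \<bullet> (A *v y)"
  for A :: "real^'n^'n"
  by (metis mv_adj)

lemma transpose_eqI: "(\<And>x y. (A *v x) \<bullet> y = x \<bullet> (A *v y)) \<Longrightarrow> transpose A = A"
  for A :: "real^'n^'n"
proof -
  assume h: "\<And>x y. (A *v x) \<bullet> y = x \<bullet> (A *v y)"
  have "transpose A *v y = A *v y" for y
  proof -
    have "x \<bullet> (transpose A *v y - A *v y) = 0" for x
      using h[of x y] mv_adj[of A x y] by (simp add: inner_diff_right)
    then show ?thesis by (metis inner_eq_zero_iff eq_iff_diff_eq_0)
  qed
  then show ?thesis by (simp add: matrix_eq)
qed

lemma spectral_aux:
  fixes f :: "'a::euclidean_space \<Rightarrow> 'a"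
  assumes lin: "linear f" and sa: "\<And>x y. f x \<bullet> y = x \<bullet> f y"
  shows "subspace S \<Longrightarrow> (\<And>x. x \<in> S \<Longrightarrow> f x \<in> S) \<Longrightarrow>
    \<exists>B. finite B \<and> B \<subseteq> S \<and> (\<forall>b\<in>B. norm b = 1 \<and> (\<exists>\<mu>. f b = \<mu> *\<^sub>R b))
      \<and> (\<forall>b\<in>B. \<forall>c\<in>B. b \<noteq> c \<longrightarrow> b \<bullet> c = 0) \<and> (\<forall>x\<in>S. x = (\<Sum>b\<in>B. (b \<bullet> x) *\<^sub>R b))"
proof (induction "dim S" arbitrary: S rule: less_induct)
  case less
  note sub = less.prems(1) and inv = less.prems(2)
  show ?case
  proof (cases "S \<subseteq> {0}")
    case True
    then show ?thesis by (intro exI[of _ "{}"]) auto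
  next
    case False
    then obtain x0 where x0: "x0 \<in> S" "x0 \<noteq> 0" by auto
    define K where "K = S \<inter> sphere 0 1"
    have "compact K" unfolding K_def
      by (simp add: closed_Int_compact closed_subspace sub)
    have "(1 / norm x0) *\<^sub>R x0 \<in> K" using x0 sub
      by (simp add: K_def subspace_scale)
    then have "K \<noteq> {}" by auto
    have "continuous_on K (\<lambda>x. x \<bullet> f x)"
      using lin by (intro continuous_intros linear_continuous_on) (simp add: linear_conv_bounded_linear)
    from continuous_attains_sup[OF \<open>compact K\<close> \<open>K \<noteq> {}\<close> this]
    obtain v where v: "v \<in> K" and vmax: "\<And>y. y \<in> K \<Longrightarrow> y \<bullet> f y \<le> v \<bullet> f v" by blast
    define l where "l = v \<bullet> f v"
    have vS: "v \<in> S" and nv: "norm v = 1" using v by (auto simp: K_def)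
    have vv: "v \<bullet> v = 1" using nv by (simp add: norm_eq_1)
    have Q: "x \<bullet> f x \<le> l * (x \<bullet> x)" if "x \<in> S" for x
    proof (cases "x = 0")
      case True then show ?thesis using lin by (simp add: linear_0)
    next
      case False
      define y where "y = (1 / norm x) *\<^sub>R x"
      have "y \<in> K" using that False sub by (simp add: K_def y_def subspace_scale)
      then have "y \<bullet> f y \<le> l" using vmax l_def by auto
      moreover have "y \<bullet> f y = (x \<bullet> f x) / (norm x)^2"
        using lin by (simp add: y_def linear_scale power2_eq_square)
      ultimately have "(x \<bullet> f x) / (norm x)^2 \<le> l" by simp
      moreover have "(norm x)^2 > 0" using False by simp
      ultimately show ?thesis by (simp add: divide_le_eq power2_norm_eq_inner mult.commute)
    qed
    define g where "g x = l *\<^sub>R x - f x" for x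
    have glin: "linear g" unfolding g_def using lin
      by (intro linearI) (simp_all add: linear_add linear_scale algebra_simps)
    have gS: "g x \<in> S" if "x \<in> S" for x
      using that inv sub by (simp add: g_def subspace_diff subspace_scale)
    have gsa: "g x \<bullet> y = x \<bullet> g y" for x y
      by (simp add: g_def inner_diff_left inner_diff_right sa)
    have gpos: "0 \<le> x \<bullet> g x" if "x \<in> S" for x
      using Q[OF that] by (simp add: g_def inner_diff_right)
    have gv0: "v \<bullet> g v = 0" by (simp add: g_def inner_diff_right vv l_def)
    define w where "w = g v"
    have wS: "w \<in> S" using gS vS w_def by auto
    define c where "c = w \<bullet> g w"
    have c0: "c \<ge> 0" using gpos[OF wS] c_def by simp
    have quad: "0 \<le> - 2 * s * (w \<bullet> w) + s^2 * c" for s :: real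
    proof -
      have "v - s *\<^sub>R w \<in> S" using vS wS sub by (simp add: subspace_diff subspace_scale)
      from gpos[OF this] have "0 \<le> (v - s *\<^sub>R w) \<bullet> g (v - s *\<^sub>R w)" .
      also have "g (v - s *\<^sub>R w) = g v - s *\<^sub>R g w" using glin by (simp add: linear_diff linear_scale)
      also have "(v - s *\<^sub>R w) \<bullet> (g v - s *\<^sub>R g w) = v \<bullet> g v - s * (v \<bullet> g w) - s * (w \<bullet> g v) + s^2 * (w \<bullet> g w)"
        by (simp add: inner_diff_left inner_diff_right power2_eq_square right_diff_distrib)
      also have "v \<bullet> g w = w \<bullet> w" using gsa[of v w] w_def by simp
      finally show ?thesis using gv0 w_def c_def by simp
    qed
    have ww: "w \<bullet> w = 0"
    proof (rule ccontr)
      assume "w \<bullet> w \<noteq> 0"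
      then have p: "w \<bullet> w > 0" by (simp add: order_less_le)
      define s where "s = (w \<bullet> w) / (c + 1)"
      have sp: "s > 0" using p c0 by (simp add: s_def)
      have "0 \<le> - 2 * s * (w \<bullet> w) + s^2 * c" by (rule quad)
      then have "0 \<le> s * (s * c - 2 * (w \<bullet> w))" by (simp add: power2_eq_square algebra_simps)
      then have "2 * (w \<bullet> w) \<le> s * c" using sp by (simp add: zero_le_mult_iff)
      moreover have "s * c < w \<bullet> w" using p c0 unfolding s_def
        by (simp add: field_simps)
      ultimately show False using p by simp
    qed
    then have fv: "f v = l *\<^sub>R v" using w_def g_def by simp
    define S' where "S' = {x \<in> S. v \<bullet> x = 0}"
    have sub': "subspace S'" unfolding S'_def subspace_def
    proof (intro conjI ballI allI)
      show "0 \<in> {x \<in> S. v \<bullet> x = 0}" using sub subspace_0 by auto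
    next
      fix x y assume "x \<in> {x \<in> S. v \<bullet> x = 0}" "y \<in> {x \<in> S. v \<bullet> x = 0}"
      then show "x + y \<in> {x \<in> S. v \<bullet> x = 0}" using sub subspace_add[of S x y] by (simp add: inner_add_right)
    next
      fix c and x assume "x \<in> {x \<in> S. v \<bullet> x = 0}"
      then show "c *\<^sub>R x \<in> {x \<in> S. v \<bullet> x = 0}" using sub subspace_scale[of S x c] by simp
    qed
    have inv': "f x \<in> S'" if "x \<in> S'" for x
    proof -
      have "v \<bullet> f x = f v \<bullet> x" by (simp add: sa)
      then show ?thesis using that inv by (simp add: S'_def fv)
    qed
    have "v \<notin> S'" using vv by (simp add: S'_def)
    then have "S' \<subset> S" using vS unfolding S'_def by blast
    then have "dim S' < dim S"
      using dim_psubset[of S' S] sub sub' by (metis span_eq_iff)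
    from less.hyps[OF this sub' inv']
    obtain B where B: "finite B" "B \<subseteq> S'" "\<forall>b\<in>B. norm b = 1 \<and> (\<exists>\<mu>. f b = \<mu> *\<^sub>R b)"
      "\<forall>b\<in>B. \<forall>c\<in>B. b \<noteq> c \<longrightarrow> b \<bullet> c = 0" "\<forall>x\<in>S'. x = (\<Sum>b\<in>B. (b \<bullet> x) *\<^sub>R b)" by blast
    have vB: "v \<notin> B" using B(2) vv by (auto simp: S'_def)
    have orth: "b \<bullet> v = 0" if "b \<in> B" for b using B(2) that by (auto simp: S'_def inner_commute)
    show ?thesis
    proof (intro exI[of _ "insert v B"] conjI)
      show "finite (insert v B)" using B by simp
      show "insert v B \<subseteq> S" using B vS by (auto simp: S'_def)
      show "\<forall>b\<in>insert v B. norm b = 1 \<and> (\<exists>\<mu>. f b = \<mu> *\<^sub>R b)" using B nv fv by auto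
      show "\<forall>b\<in>insert v B. \<forall>c\<in>insert v B. b \<noteq> c \<longrightarrow> b \<bullet> c = 0"
        using B orth by (auto simp: inner_commute)
      show "\<forall>x\<in>S. x = (\<Sum>b\<in>insert v B. (b \<bullet> x) *\<^sub>R b)"
      proof
        fix x assume xS: "x \<in> S"
        define x' where "x' = x - (v \<bullet> x) *\<^sub>R v"
        have "x' \<in> S'" using xS sub vS vv by (simp add: S'_def x'_def subspace_diff subspace_scale inner_diff_right)
        then have "x' = (\<Sum>b\<in>B. (b \<bullet> x') *\<^sub>R b)" using B by auto
        also have "\<dots> = (\<Sum>b\<in>B. (b \<bullet> x) *\<^sub>R b)"
          by (intro sum.cong refl) (simp add: x'_def inner_diff_right orth)
        finally have "x = (v \<bullet> x) *\<^sub>R v + (\<Sum>b\<in>B. (b \<bullet> x) *\<^sub>R b)" by (simp add: x'_def algebra_simps)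
        then show "x = (\<Sum>b\<in>insert v B. (b \<bullet> x) *\<^sub>R b)" using B(1) vB by simp
      qed
    qed
  qed
qed


lemma ortho_coef:
  fixes B :: "'a::real_inner set"
  assumes "finite B" "c \<in> B" "\<forall>b\<in>B. \<forall>c\<in>B. b \<noteq> c \<longrightarrow> b \<bullet> c = 0" "norm c = 1"
  shows "c \<bullet> (\<Sum>b\<in>B. a b *\<^sub>R b) = a c"
proof -
  have "c \<bullet> (\<Sum>b\<in>B. a b *\<^sub>R b) = (\<Sum>b\<in>B. a b * (c \<bullet> b))"
    by (simp add: inner_sum_right)
  also have "\<dots> = (\<Sum>b\<in>B. if b = c then a c else 0)"
    using assms by (intro sum.cong refl) (auto simp: norm_eq_1 inner_commute)
  also have "\<dots> = a c" using assms by simp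
  finally show ?thesis .
qed

lemma matrix_inv_both:
  fixes A :: "real^'n^'n"
  assumes "invertible A"
  shows "A ** matrix_inv A = mat 1" "matrix_inv A ** A = mat 1"
proof -
  have "\<exists>A'. A ** A' = mat 1 \<and> A' ** A = mat 1" using assms by (simp add: invertible_def)
  then have "A ** matrix_inv A = mat 1 \<and> matrix_inv A ** A = mat 1"
    unfolding matrix_inv_def by (rule someI_ex)
  then show "A ** matrix_inv A = mat 1" "matrix_inv A ** A = mat 1" by auto
qed

lemma sym_pos_inj: "sym_pos_def S \<Longrightarrow> S *v x = 0 \<Longrightarrow> x = 0"
  for S :: "real^'n^'n"
  unfolding sym_pos_def_def by (metis inner_zero_right less_irrefl)

lemma invertible_if_inj:
  fixes S :: "real^'n^'n"
  assumes "\<And>x. S *v x = 0 \<Longrightarrow> x = 0"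
  shows "invertible S"
proof -
  have lin: "linear ((*v) S)" by (simp add: matrix_vector_mul_linear)
  have "inj ((*v) S)"
    by (intro injI) (metis assms eq_iff_diff_eq_0 matrix_vector_mult_diff_distrib)
  then have "bij ((*v) S)" using linear_inj_imp_surj[OF lin] by (simp add: bij_def)
  then show ?thesis by (simp add: invertible_eq_bij)
qed

lemma sym_pos_invertible: "sym_pos_def S \<Longrightarrow> invertible S"
  for S :: "real^'n^'n"
  by (rule invertible_if_inj) (rule sym_pos_inj)

lemma spectral_matrix:
  fixes A :: "real^'n^'n"
  assumes "transpose A = A"
  shows "\<exists>B. finite B \<and> (\<forall>b\<in>B. norm b = 1 \<and> (\<exists>\<mu>. A *v b = \<mu> *\<^sub>R b))
      \<and> (\<forall>b\<in>B. \<forall>c\<in>B. b \<noteq> c \<longrightarrow> b \<bullet> c = 0) \<and> (\<forall>x. x = (\<Sum>b\<in>B. (b \<bullet> x) *\<^sub>R b))"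
  using spectral_aux[of "(*v) A" UNIV] sym_adj[OF assms]
  by (simp add: matrix_vector_mul_linear)

lemma sqrt_exists:
  fixes A :: "real^'n^'n"
  assumes A: "sym_pos_def A"
  shows "\<exists>S. sym_pos_def S \<and> S ** S = A"
proof -
  have At: "transpose A = A" using A by (simp add: sym_pos_def_def)
  obtain B where B: "finite B" "\<forall>b\<in>B. norm b = 1 \<and> (\<exists>\<mu>. A *v b = \<mu> *\<^sub>R b)"
      "\<forall>b\<in>B. \<forall>c\<in>B. b \<noteq> c \<longrightarrow> b \<bullet> c = 0" "\<forall>x. x = (\<Sum>b\<in>B. (b \<bullet> x) *\<^sub>R b)"
    using spectral_matrix[OF At] by blast
  obtain mu where mu: "\<forall>b\<in>B. A *v b = mu b *\<^sub>R b" using B(2) by metis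
  have mupos: "mu b > 0" if "b \<in> B" for b
  proof -
    have nb: "norm b = 1" using B(2) that by auto
    then have "b \<noteq> 0" by auto
    then have "b \<bullet> (A *v b) > 0" using A by (simp add: sym_pos_def_def)
    also have "b \<bullet> (A *v b) = mu b" using mu that nb by (simp add: norm_eq_1)
    finally show ?thesis .
  qed
  define h where "h x = (\<Sum>b\<in>B. (sqrt (mu b) * (b \<bullet> x)) *\<^sub>R b)" for x
  have hlin: "linear h" unfolding h_def
  proof (rule linearI)
    show "(\<Sum>b\<in>B. (sqrt (mu b) * (b \<bullet> (x + y))) *\<^sub>R b) =
      (\<Sum>b\<in>B. (sqrt (mu b) * (b \<bullet> x)) *\<^sub>R b) + (\<Sum>b\<in>B. (sqrt (mu b) * (b \<bullet> y)) *\<^sub>R b)" for x y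
      by (simp add: inner_add_right distrib_left scaleR_add_left sum.distrib)
    show "(\<Sum>b\<in>B. (sqrt (mu b) * (b \<bullet> (c *\<^sub>R x))) *\<^sub>R b) =
      c *\<^sub>R (\<Sum>b\<in>B. (sqrt (mu b) * (b \<bullet> x)) *\<^sub>R b)" for c x
      by (simp add: scaleR_sum_right mult.left_commute)
  qed
  define S where "S = matrix h"
  have Sh: "S *v x = h x" for x unfolding S_def
    using hlin by (simp add: matrix_works linear_matrix_vector_mul_eq)
  have coef: "c \<bullet> h x = sqrt (mu c) * (c \<bullet> x)" if "c \<in> B" for c x
    unfolding h_def using ortho_coef[OF B(1) that B(3)] B(2) that by auto
  show ?thesis
  proof (intro exI[of _ S] conjI)
    show "S ** S = A"
    proof (subst matrix_eq, intro allI)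
      fix x
      have "(S ** S) *v x = h (h x)" by (simp add: Sh flip: matrix_vector_mul_assoc)
      also have "\<dots> = (\<Sum>b\<in>B. (mu b * (b \<bullet> x)) *\<^sub>R b)"
        unfolding h_def[of "h x"] using mupos
        by (intro sum.cong refl) (simp add: coef mult.assoc[symmetric] abs_of_pos)
      also have "\<dots> = A *v (\<Sum>b\<in>B. (b \<bullet> x) *\<^sub>R b)"
        by (simp add: vec.sum matrix_vector_mult_scaleR mu mult.commute)
      also have "\<dots> = A *v x" using B(4) by metis
      finally show "(S ** S) *v x = A *v x" .
    qed
    have Sxy: "(S *v x) \<bullet> y = (\<Sum>b\<in>B. sqrt (mu b) * (b \<bullet> x) * (b \<bullet> y))" for x y
      by (simp add: Sh h_def inner_sum_left)
    show "sym_pos_def S" unfolding sym_pos_def_def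
    proof (intro conjI allI impI)
      show "transpose S = S"
      proof (rule transpose_eqI)
        fix x y :: "real^'n"
        have "x \<bullet> (S *v y) = (S *v y) \<bullet> x" by (rule inner_commute)
        then show "(S *v x) \<bullet> y = x \<bullet> (S *v y)" by (simp add: Sxy mult_ac)
      qed
      fix x :: "real^'n" assume "x \<noteq> 0"
      then obtain c where c: "c \<in> B" "c \<bullet> x \<noteq> 0"
        using B(4) by (metis (no_types, lifting) scale_zero_left sum.neutral)
      have "x \<bullet> (S *v x) = (\<Sum>b\<in>B. sqrt (mu b) * (b \<bullet> x) * (b \<bullet> x))"
        by (simp add: Sxy inner_commute[of x])
      also have "\<dots> > 0"
      proof (rule sum_pos2[OF B(1) c(1)])
        have "sqrt (mu c) > 0" using mupos c by simp
        moreover have "(c \<bullet> x) * (c \<bullet> x) > 0" using c(2) by (simp flip: power2_eq_square)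
        ultimately show "0 < sqrt (mu c) * (c \<bullet> x) * (c \<bullet> x)" by (simp add: mult.assoc)
        fix i assume "i \<in> B"
        then have "sqrt (mu i) \<ge> 0" using mupos by (simp add: less_imp_le)
        then show "0 \<le> sqrt (mu i) * (i \<bullet> x) * (i \<bullet> x)" by (simp add: mult.assoc)
      qed
      finally show "x \<bullet> (S *v x) > 0" .
    qed
  qed
qed

lemma eig_sqrt:
  fixes S :: "real^'n^'n"
  assumes S: "sym_pos_def S" and eb: "(S ** S) *v b = \<mu> *\<^sub>R b" and b0: "b \<noteq> 0"
  shows "\<mu> > 0 \<and> S *v b = sqrt \<mu> *\<^sub>R b"
proof -
  have St: "transpose S = S" using S by (simp add: sym_pos_def_def)
  have Sb: "S *v b \<noteq> 0" using S b0 sym_pos_inj by blast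
  have "\<mu> * (b \<bullet> b) = b \<bullet> ((S ** S) *v b)" using eb by simp
  also have "\<dots> = (S *v b) \<bullet> (S *v b)"
    by (simp add: sym_adj[OF St] flip: matrix_vector_mul_assoc)
  finally have "\<mu> * (b \<bullet> b) > 0" using Sb by simp
  moreover have "b \<bullet> b > 0" using b0 by simp
  ultimately have mp: "\<mu> > 0" by (simp add: zero_less_mult_iff)
  define r where "r = sqrt \<mu>"
  have r: "r > 0" "r * r = \<mu>" using mp by (auto simp: r_def)
  define w where "w = S *v b - r *\<^sub>R b"
  have "S *v w + r *\<^sub>R w = (S ** S) *v b - (r * r) *\<^sub>R b"
    by (simp add: w_def matrix_vector_mult_diff_distrib matrix_vector_mult_scaleR algebra_simps
        flip: matrix_vector_mul_assoc)
  also have "\<dots> = 0" using eb r by simp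
  finally have "S *v w = - r *\<^sub>R w" by (simp add: eq_neg_iff_add_eq_0)
  then have eqw: "w \<bullet> (S *v w) = - r * (w \<bullet> w)" by simp
  have "w = 0"
  proof (rule ccontr)
    assume "w \<noteq> 0"
    then have "w \<bullet> (S *v w) > 0" using S by (simp add: sym_pos_def_def)
    moreover have "- r * (w \<bullet> w) \<le> 0" using r by simp
    ultimately show False using eqw by linarith
  qed
  then show ?thesis using mp by (simp add: w_def r_def)
qed

lemma sqrt_unique:
  fixes S T :: "real^'n^'n"
  assumes S: "sym_pos_def S" and T: "sym_pos_def T" and eq: "S ** S = T ** T"
  shows "S = T"
proof -
  have St: "transpose S = S" using S by (simp add: sym_pos_def_def)
  have At: "transpose (S ** S) = S ** S" by (simp add: matrix_transpose_mul St)
  obtain B where B: "finite B" "\<forall>b\<in>B. norm b = 1 \<and> (\<exists>\<mu>. (S ** S) *v b = \<mu> *\<^sub>R b)"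
      "\<forall>x. x = (\<Sum>b\<in>B. (b \<bullet> x) *\<^sub>R b)"
    using spectral_matrix[OF At] by blast
  have SbTb: "S *v b = T *v b" if "b \<in> B" for b
  proof -
    have "norm b = 1" "\<exists>\<mu>. (S ** S) *v b = \<mu> *\<^sub>R b" using B(2) that by auto
    then obtain \<mu> where e: "(S ** S) *v b = \<mu> *\<^sub>R b" by auto
    have b0: "b \<noteq> 0" using \<open>norm b = 1\<close> by auto
    have e2: "(T ** T) *v b = \<mu> *\<^sub>R b" using e eq by simp
    show ?thesis using eig_sqrt[OF S e b0] eig_sqrt[OF T e2 b0] by simp
  qed
  have "S *v x = T *v x" for x
  proof -
    have "S *v x = S *v (\<Sum>b\<in>B. (b \<bullet> x) *\<^sub>R b)" using B(3) by metis
    also have "\<dots> = (\<Sum>b\<in>B. (b \<bullet> x) *\<^sub>R (S *v b))"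
      by (simp add: vec.sum matrix_vector_mult_scaleR)
    also have "\<dots> = (\<Sum>b\<in>B. (b \<bullet> x) *\<^sub>R (T *v b))" using SbTb by simp
    also have "\<dots> = T *v (\<Sum>b\<in>B. (b \<bullet> x) *\<^sub>R b)"
      by (simp add: vec.sum matrix_vector_mult_scaleR)
    also have "\<dots> = T *v x" using B(3) by metis
    finally show ?thesis .
  qed
  then show ?thesis by (simp add: matrix_eq)
qed

lemma matrix_sqrt_props:
  fixes A :: "real^'n^'n"
  assumes "sym_pos_def A"
  shows "sym_pos_def (matrix_sqrt A) \<and> matrix_sqrt A ** matrix_sqrt A = A"
proof -
  have "\<exists>!S. sym_pos_def S \<and> S ** S = A"
    using sqrt_exists[OF assms] sqrt_unique by metis
  then show ?thesis unfolding matrix_sqrt_def by (rule theI')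
qed

lemma sqrt_facts:
  fixes A :: "real^'n^'n"
  assumes A: "sym_pos_def A"
  defines "S \<equiv> matrix_sqrt A" and "Sqi \<equiv> matrix_sqrt_inv A"
  shows "S ** S = A" "transpose S = S" "Sqi ** S = mat 1" "S ** Sqi = mat 1"
    "transpose Sqi = Sqi" "Sqi ** Sqi = matrix_inv A" "Sqi ** A ** Sqi = mat 1" "invertible A"
    "A ** matrix_inv A = mat 1" "matrix_inv A ** A = mat 1"
proof -
  have P: "sym_pos_def S" "S ** S = A" using matrix_sqrt_props[OF A] by (auto simp: S_def)
  show SS: "S ** S = A" by (fact P(2))
  show St: "transpose S = S" using P by (simp add: sym_pos_def_def)
  have iS: "invertible S" using P sym_pos_invertible by blast
  show L: "Sqi ** S = mat 1" and R: "S ** Sqi = mat 1"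
    using matrix_inv_both[OF iS] by (simp_all add: Sqi_def matrix_sqrt_inv_def S_def)
  have "transpose Sqi = transpose Sqi ** (S ** Sqi)" by (simp add: R)
  also have "\<dots> = transpose (S ** Sqi) ** Sqi"
    by (simp add: matrix_transpose_mul St matrix_mul_assoc)
  also have "\<dots> = Sqi" by (simp add: R transpose_mat)
  finally show "transpose Sqi = Sqi" .
  show iA: "invertible A" using A sym_pos_invertible by blast
  show AI: "A ** matrix_inv A = mat 1" "matrix_inv A ** A = mat 1" using matrix_inv_both[OF iA] by auto
  have SqiSqiA: "(Sqi ** Sqi) ** A = mat 1"
    by (metis L SS matrix_mul_assoc matrix_mul_lid)
  have "Sqi ** Sqi = (Sqi ** Sqi) ** (A ** matrix_inv A)" by (simp add: AI)
  also have "\<dots> = ((Sqi ** Sqi) ** A) ** matrix_inv A" by (simp only: matrix_mul_assoc)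
  also have "\<dots> = matrix_inv A" by (simp add: SqiSqiA)
  finally show "Sqi ** Sqi = matrix_inv A" .
  show "Sqi ** A ** Sqi = mat 1"
    by (metis L R SS matrix_mul_assoc matrix_mul_lid)
qed


lemma sum_UNIV_plus:
  fixes f :: "('a::finite + 'b::finite) \<Rightarrow> 'c::comm_monoid_add"
  shows "(\<Sum>i\<in>UNIV. f i) = (\<Sum>j\<in>UNIV. f (Inl j)) + (\<Sum>j\<in>UNIV. f (Inr j))"
proof -
  have "sum f (UNIV <+> UNIV) = sum (f \<circ> Inl) UNIV + sum (f \<circ> Inr) UNIV" by (rule sum.Plus) auto
  then show ?thesis by (simp add: UNIV_Plus_UNIV)
qed

lemma mat1_sum: "(\<Sum>l\<in>UNIV. (if j = l then 1 else 0) * (b::real^'n) $ l) = b $ j"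
  by (simp add: if_distrib[where f="\<lambda>x. x * _"] cong: if_cong)

lemma vfst_vjoin[simp]: "vfst (vjoin a b) = a" and vsnd_vjoin[simp]: "vsnd (vjoin a b) = b"
  by (simp_all add: vfst_def vsnd_def vjoin_def vec_eq_iff)

lemma vjoin_parts: "vjoin (vfst v) (vsnd v) = v"
  by (simp add: vfst_def vsnd_def vjoin_def vec_eq_iff split: sum.split)

lemma vjoin_add: "vjoin a b + vjoin c d = vjoin (a + c) (b + d)"
  and vjoin_diff: "vjoin a b - vjoin c d = vjoin (a - c) (b - d)"
  and vjoin_scale: "r *\<^sub>R vjoin a b = vjoin (r *\<^sub>R a) (r *\<^sub>R b)"
  and vjoin_uminus: "- vjoin a b = vjoin (- a) (- b)"
  and vjoin_zero: "vjoin (0::real^'k1::finite) (0::real^'k2::finite) = 0"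
  by (simp_all add: vjoin_def vec_eq_iff split: sum.split)

lemma vfst_add: "vfst (a + b) = vfst a + vfst b" and vsnd_add: "vsnd (a + b) = vsnd a + vsnd b"
  and vfst_diff: "vfst (a - b) = vfst a - vfst b" and vsnd_diff: "vsnd (a - b) = vsnd a - vsnd b"
  by (simp_all add: vfst_def vsnd_def vec_eq_iff)

lemma Xv_split: "X *v v = Xfst X *v vfst v + Xsnd X *v vsnd v"
  by (simp add: vec_eq_iff matrix_vector_mult_def Xfst_def Xsnd_def vfst_def vsnd_def sum_UNIV_plus)

lemma Xv_vjoin: "X *v vjoin a b = Xfst X *v a + Xsnd X *v b"
  by (simp add: Xv_split)

lemma Xt_split: "transpose X *v w = vjoin (transpose (Xfst X) *v w) (transpose (Xsnd X) *v w)"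
  by (simp add: vec_eq_iff matrix_vector_mult_def Xfst_def Xsnd_def vjoin_def transpose_def split: sum.split)

lemma Bn_mult: "Bn X *v b = vjoin (G12 X *v b) (- b)"
  by (simp add: vec_eq_iff matrix_vector_mult_def Bn_def vjoin_def mat_def sum_negf mat1_sum split: sum.split)

lemma Cn_mult: "Cn X *v z = vjoin (matrix_sqrt_inv (transpose (Xfst X) ** Xfst X) *v z) 0"
  by (simp add: vec_eq_iff matrix_vector_mult_def Cn_def vjoin_def split: sum.split)

lemma Dn_mult: "Dn X *v z = vjoin ((- (G12 X ** matrix_sqrt_inv (M22 X))) *v z) (matrix_sqrt_inv (M22 X) *v z)"
  by (simp add: vec_eq_iff matrix_vector_mult_def Dn_def vjoin_def split: sum.split)


declare transpose_matrix_vector[simp del]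

lemma neg_mv: "(- A) *v x = - (A *v x)" for A :: "real^'n^'m"
  by (simp add: vec_eq_iff matrix_vector_mult_def sum_negf)

definition XtX1 :: "real^('k1::finite+'k2::finite)^'n \<Rightarrow> real^'k1^'k1" where
  "XtX1 X = transpose (Xfst X) ** Xfst X"

definition IPm :: "real^('k1::finite+'k2::finite)^'n \<Rightarrow> real^'n^'n" where
  "IPm X = mat 1 - proj_R X"

definition Q1m :: "real^('k1::finite+'k2::finite)^'n \<Rightarrow> real^'n^'k1" where
  "Q1m X = matrix_sqrt_inv (XtX1 X) ** transpose (Xfst X)"

definition Q2m :: "real^('k1::finite+'k2::finite)^'n \<Rightarrow> real^'n^'k2" where
  "Q2m X = matrix_sqrt_inv (M22 X) ** transpose (Xsnd X) ** IPm X"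

context
  fixes X :: "real^('k1::finite+'k2::finite)^'n"
  assumes inj: "\<And>x. X *v x = 0 \<Longrightarrow> x = 0"
begin

lemma X1_inj: "Xfst X *v a = 0 \<Longrightarrow> a = 0"
  using inj[of "vjoin a 0"] by (metis Xv_vjoin add.right_neutral matrix_vector_mult_0_right vfst_vjoin vjoin_zero)

lemma XtX1_pos: "sym_pos_def (XtX1 X)"
  unfolding sym_pos_def_def XtX1_def
proof (intro conjI allI impI)
  show "transpose (transpose (Xfst X) ** Xfst X) = transpose (Xfst X) ** Xfst X"
    by (simp add: matrix_transpose_mul)
  fix a :: "real^'k1" assume "a \<noteq> 0"
  then have "Xfst X *v a \<noteq> 0" using X1_inj by blast
  moreover have "a \<bullet> ((transpose (Xfst X) ** Xfst X) *v a) = (Xfst X *v a) \<bullet> (Xfst X *v a)"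
    by (simp add: mv_adj flip: matrix_vector_mul_assoc)
  ultimately show "0 < a \<bullet> ((transpose (Xfst X) ** Xfst X) *v a)" by simp
qed

lemmas A1F = sqrt_facts[OF XtX1_pos]

lemma Ai_sym: "transpose (matrix_inv (XtX1 X)) = matrix_inv (XtX1 X)"
  by (metis A1F(5) A1F(6) matrix_transpose_mul)

lemma P_mv: "proj_R X *v y = Xfst X *v (matrix_inv (XtX1 X) *v (transpose (Xfst X) *v y))"
  by (simp add: proj_R_def XtX1_def flip: matrix_vector_mul_assoc)

lemma IP_mv: "IPm X *v y = y - proj_R X *v y"
  by (simp add: IPm_def matrix_vector_mult_diff_rdistrib)

lemma F1: "transpose (Xfst X) *v (IPm X *v y) = 0"
proof -
  have "transpose (Xfst X) *v (proj_R X *v y) = (XtX1 X ** matrix_inv (XtX1 X)) *v (transpose (Xfst X) *v y)"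
    by (simp add: P_mv XtX1_def flip: matrix_vector_mul_assoc)
  then show ?thesis by (simp add: IP_mv matrix_vector_mult_diff_distrib A1F(9))
qed

lemma F2: "IPm X *v (Xfst X *v a) = 0"
proof -
  have "proj_R X *v (Xfst X *v a) = Xfst X *v ((matrix_inv (XtX1 X) ** XtX1 X) *v a)"
    by (simp add: P_mv XtX1_def flip: matrix_vector_mul_assoc)
  then show ?thesis by (simp add: IP_mv A1F(10))
qed

lemma P_adj: "(proj_R X *v y) \<bullet> z = y \<bullet> (proj_R X *v z)"
  by (simp add: P_mv mv_adj Ai_sym)

lemma F3: "(IPm X *v y) \<bullet> z = y \<bullet> (IPm X *v z)"
  by (simp add: IP_mv inner_diff_left inner_diff_right P_adj)

lemma IP_sym: "transpose (IPm X) = IPm X"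
  by (rule transpose_eqI) (rule F3)

lemma P_sym: "transpose (proj_R X) = proj_R X"
  by (rule transpose_eqI) (rule P_adj)

lemma F4: "IPm X *v (IPm X *v y) = IPm X *v y"
proof -
  have "IPm X *v (IPm X *v y) = IPm X *v y - IPm X *v (proj_R X *v y)"
    by (simp add: IP_mv[of y] matrix_vector_mult_diff_distrib)
  also have "IPm X *v (proj_R X *v y) = 0" by (simp add: P_mv F2)
  finally show ?thesis by simp
qed

lemma IP_idem: "IPm X ** IPm X = IPm X"
  by (simp add: matrix_eq F4 flip: matrix_vector_mul_assoc)

lemma M_mv: "M22 X *v x = transpose (Xsnd X) *v (IPm X *v (Xsnd X *v x))"
  by (simp add: M22_def IPm_def flip: matrix_vector_mul_assoc)

lemma M_quad: "x \<bullet> (M22 X *v x) = (IPm X *v (Xsnd X *v x)) \<bullet> (IPm X *v (Xsnd X *v x))"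
  by (simp add: M_mv mv_adj[symmetric] F3 F4)

lemma M_pos: "sym_pos_def (M22 X)"
  unfolding sym_pos_def_def
proof (intro conjI allI impI)
  show "transpose (M22 X) = M22 X"
    using IP_sym by (simp add: M22_def matrix_transpose_mul matrix_mul_assoc IPm_def)
  fix x :: "real^'k2" assume x0: "x \<noteq> 0"
  show "0 < x \<bullet> (M22 X *v x)"
  proof (rule ccontr)
    assume "\<not> 0 < x \<bullet> (M22 X *v x)"
    then have "IPm X *v (Xsnd X *v x) = 0" using M_quad[of x] by simp
    then have e: "Xsnd X *v x = proj_R X *v (Xsnd X *v x)" by (simp add: IP_mv)
    define g where "g = matrix_inv (XtX1 X) *v (transpose (Xfst X) *v (Xsnd X *v x))"
    have e': "Xsnd X *v x = Xfst X *v g" using e by (simp add: P_mv g_def)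
    have "X *v vjoin (- g) x = 0"
      by (simp add: Xv_vjoin vec.neg e')
    then have "vjoin (- g) x = 0" by (rule inj)
    then have "x = 0" by (metis vsnd_vjoin vjoin_zero)
    with x0 show False by simp
  qed
qed

lemmas MF = sqrt_facts[OF M_pos]

end


lemma mm2: "A ** B = mat 1 \<Longrightarrow> A *v (B *v w) = w" for A :: "real^'n^'m"
  by (metis matrix_vector_mul_assoc matrix_vector_mul_lid)

lemma mm3: "A ** B ** C = mat 1 \<Longrightarrow> A *v (B *v (C *v w)) = w" for A :: "real^'n^'m"
  by (metis matrix_vector_mul_assoc matrix_vector_mul_lid)

context
  fixes X :: "real^('k1::finite+'k2::finite)^'n"
  assumes inj: "\<And>x. X *v x = 0 \<Longrightarrow> x = 0"
begin

lemmas A1 = A1F[OF inj] and M = MF[OF inj] and Ai_sym' = Ai_sym[OF inj]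
lemmas F1' = F1[OF inj] and F2' = F2[OF inj] and F3' = F3[OF inj] and F4' = F4[OF inj]
  and IP_sym' = IP_sym[OF inj] and P_mv' = P_mv[OF inj] and IP_mv' = IP_mv[OF inj]
  and M_mv' = M_mv[OF inj]

lemma XtX1_mv: "transpose (Xfst X) *v (Xfst X *v v) = XtX1 X *v v"
  by (simp add: XtX1_def matrix_vector_mul_assoc)

lemma Q1_mv: "Q1m X *v u = matrix_sqrt_inv (XtX1 X) *v (transpose (Xfst X) *v u)"
  by (simp add: Q1m_def matrix_vector_mul_assoc)

lemma Q1t_mv: "transpose (Q1m X) *v w = Xfst X *v (matrix_sqrt_inv (XtX1 X) *v w)"
  by (simp add: Q1m_def matrix_transpose_mul A1(5) matrix_vector_mul_assoc)

lemma Q2_mv: "Q2m X *v u = matrix_sqrt_inv (M22 X) *v (transpose (Xsnd X) *v (IPm X *v u))"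
  by (simp add: Q2m_def matrix_vector_mul_assoc matrix_mul_assoc)

lemma Q2t_mv: "transpose (Q2m X) *v w = IPm X *v (Xsnd X *v (matrix_sqrt_inv (M22 X) *v w))"
  by (simp add: Q2m_def matrix_transpose_mul M(5) IP_sym' matrix_vector_mul_assoc matrix_mul_assoc)

lemma Q1Q1t: "Q1m X ** transpose (Q1m X) = mat 1"
  by (simp add: matrix_eq Q1_mv Q1t_mv XtX1_mv mm3[OF A1(7)] flip: matrix_vector_mul_assoc)

lemma Q2Q2t: "Q2m X ** transpose (Q2m X) = mat 1"
  by (simp add: matrix_eq Q2_mv Q2t_mv F4' mm3[OF M(7)] flip: M_mv' matrix_vector_mul_assoc)

lemma Q1Q2t: "Q1m X ** transpose (Q2m X) = 0"
  by (simp add: matrix_eq Q1_mv Q2t_mv F1' flip: matrix_vector_mul_assoc)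

end


lemma vjoin_eq_iff: "vjoin a b = vjoin c d \<longleftrightarrow> a = c \<and> b = d"
  by (metis vfst_vjoin vsnd_vjoin)

context
  fixes X :: "real^('k1::finite+'k2::finite)^'n"
  assumes inj: "\<And>x. X *v x = 0 \<Longrightarrow> x = 0"
begin

lemmas A1' = A1F[OF inj] and M' = MF[OF inj]
lemmas F1'' = F1[OF inj] and IP_mv'' = IP_mv[OF inj] and P_mv'' = P_mv[OF inj]
  and M_mv'' = M_mv[OF inj] and M_quad' = M_quad[OF inj]
  and Q1_mv' = Q1_mv[OF inj] and Q2_mv' = Q2_mv[OF inj]
  and XtX1_mv' = XtX1_mv[OF inj]

lemma XX_pos: "sym_pos_def (transpose X ** X)"
  unfolding sym_pos_def_def
proof (intro conjI allI impI)
  show "transpose (transpose X ** X) = transpose X ** X"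
    by (simp add: matrix_transpose_mul)
  fix a :: "real^('k1+'k2)" assume "a \<noteq> 0"
  then have "X *v a \<noteq> 0" using inj by blast
  moreover have "a \<bullet> ((transpose X ** X) *v a) = (X *v a) \<bullet> (X *v a)"
    by (simp add: mv_adj flip: matrix_vector_mul_assoc)
  ultimately show "0 < a \<bullet> ((transpose X ** X) *v a)" by simp
qed

lemmas XXF = sqrt_facts[OF XX_pos]

lemma est_identity:
  fixes \<beta> :: "real^('k1+'k2)" and u :: "real^'n" and c \<alpha> \<sigma> :: real
  shows "c *\<^sub>R (beta_tilde \<alpha> \<sigma> X (X *v \<beta> + u) - \<beta>) =
     Cn X *v (c *\<^sub>R (Q1m X *v u)) + Dn X *v (c *\<^sub>R (Q2m X *v u))
     - (1 / (1 + exp (- 2 * \<alpha> * real CARD('k2))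
          * exp (\<alpha> * (norm (Q2m X *v u + matrix_sqrt (M22 X) *v vsnd \<beta>))\<^sup>2 / \<sigma>\<^sup>2)))
       *\<^sub>R (Dn X *v (c *\<^sub>R (Q2m X *v u)) - Bn X *v (c *\<^sub>R vsnd \<beta>))"
proof -
  let ?X1 = "Xfst X" and ?X2 = "Xsnd X" and ?Ai = "matrix_inv (XtX1 X)"
    and ?R1i = "matrix_sqrt_inv (XtX1 X)" and ?Rm = "matrix_sqrt (M22 X)"
    and ?Rmi = "matrix_sqrt_inv (M22 X)" and ?G = "G12 X" and ?IP = "IPm X" and ?P = "proj_R X"
  define b1 where "b1 = vfst \<beta>"
  define b2 where "b2 = vsnd \<beta>"
  have beq: "\<beta> = vjoin b1 b2" by (simp add: b1_def b2_def vjoin_parts)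
  define Y where "Y = X *v \<beta> + u"
  define Z1 where "Z1 = Q1m X *v u"
  define Z2 where "Z2 = Q2m X *v u"
  define h where "h = ?Ai *v (transpose ?X1 *v u)"
  define e where "e = ?Rmi *v Z2"
  have G_mv: "?G *v x = ?Ai *v (transpose ?X1 *v (?X2 *v x))" for x
    by (simp add: G12_def XtX1_def matrix_vector_mul_assoc matrix_mul_assoc)
  have Ph: "?X1 *v h = ?P *v u" by (simp add: h_def P_mv'')
  have PG: "?X1 *v (?G *v x) = ?P *v (?X2 *v x)" for x by (simp add: G_mv P_mv'')
  have Pu: "?P *v u = u - ?IP *v u" by (simp add: IP_mv'')
  have bR: "betaR X Y = vjoin (b1 + ?G *v b2 + h) 0"
  proof -
    have "transpose ?X1 *v Y = XtX1 X *v b1 + transpose ?X1 *v (?X2 *v b2) + transpose ?X1 *v u"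
      by (simp add: Y_def beq Xv_vjoin vec.add XtX1_mv')
    then have "?Ai *v (transpose ?X1 *v Y) = b1 + ?G *v b2 + h"
      by (simp add: vec.add mm2[OF A1'(10)] G_mv h_def)
    then show ?thesis by (simp add: betaR_def XtX1_def[symmetric])
  qed
  define d where "d = vjoin (h - ?G *v e) e"
  have Xd: "X *v d = ?P *v u + ?IP *v (?X2 *v e)"
    by (simp add: d_def Xv_vjoin vec.diff Ph PG IP_mv'')
  have Me: "M22 X *v e = transpose ?X2 *v (?IP *v u)"
  proof -
    have "M22 X ** ?Rmi ** ?Rmi = mat 1" by (simp add: M'(6) M'(9) flip: matrix_mul_assoc)
    then show ?thesis by (simp add: e_def Z2_def Q2_mv' mm3)
  qed
  have X1P: "transpose ?X1 *v (?P *v u) = transpose ?X1 *v u"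
    by (simp add: Pu vec.diff F1'')
  have X2P: "transpose ?X2 *v (?P *v u) + transpose ?X2 *v (?IP *v u) = transpose ?X2 *v u"
    by (simp add: Pu vec.diff)
  have XtXd: "transpose X *v (X *v d) = transpose X *v u"
    using X2P by (simp add: Xd Xt_split vec.add F1'' X1P M_mv''[symmetric] Me vjoin_add)
  have bU: "betaU X Y = \<beta> + d"
  proof -
    have "transpose X *v Y = (transpose X ** X) *v (\<beta> + d)"
      by (simp add: Y_def vec.add XtXd matrix_vector_mul_assoc[symmetric] matrix_vector_right_distrib)
    moreover have "matrix_inv (transpose X ** X) ** transpose X ** X = mat 1"
      using XXF(10) by (simp add: matrix_mul_assoc)
    ultimately show ?thesis by (simp add: betaU_def mm3 flip: matrix_vector_mul_assoc)
  qed
  define w where "w = b2 + e"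
  have RU: "betaR X Y - betaU X Y = vjoin (?G *v w) (- w)"
    by (simp add: bR bU beq d_def w_def vjoin_add vjoin_diff vjoin_eq_iff vec.add algebra_simps)
  have XRU: "X *v betaR X Y - X *v betaU X Y = - (?IP *v (?X2 *v w))"
    by (simp add: vec.diff[symmetric] RU Xv_vjoin PG IP_mv'' vec.neg)
  have wv: "w = ?Rmi *v (Z2 + ?Rm *v b2)"
    by (simp add: w_def e_def vec.add mm2[OF M'(3)])
  have Rmw: "?Rm *v w = Z2 + ?Rm *v b2"
    by (simp add: wv mm2[OF M'(4)])
  have "(norm (X *v betaR X Y - X *v betaU X Y))\<^sup>2 = w \<bullet> (M22 X *v w)"
    by (simp add: XRU M_quad' power2_norm_eq_inner)
  also have "w \<bullet> (M22 X *v w) = (?Rm *v w) \<bullet> (?Rm *v w)"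
  proof -
    have "M22 X *v w = ?Rm *v (?Rm *v w)" by (metis M'(1) matrix_vector_mul_assoc)
    then show ?thesis by (simp add: sym_adj[OF M'(2)])
  qed
  also have "\<dots> = (norm (Z2 + ?Rm *v b2))\<^sup>2" by (simp add: Rmw power2_norm_eq_inner)
  finally have normeq: "(norm (X *v betaR X Y - X *v betaU X Y))\<^sup>2 = (norm (Z2 + ?Rm *v b2))\<^sup>2" .
  define lam where "lam = lambda_hat \<alpha> \<sigma> X Y"
  have lam: "lam = 1 / (1 + exp (- 2 * \<alpha> * real CARD('k2)) * exp (\<alpha> * (norm (Z2 + ?Rm *v b2))\<^sup>2 / \<sigma>\<^sup>2))"
    by (simp add: lam_def lambda_hat_def normeq)
  have Cz: "Cn X *v (c *\<^sub>R Z1) = c *\<^sub>R vjoin h 0"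
  proof -
    have "?R1i *v (?R1i *v v) = ?Ai *v v" for v by (metis A1'(6) matrix_vector_mul_assoc)
    then show ?thesis
      by (subst Cn_mult) (simp add: XtX1_def[symmetric] Z1_def Q1_mv' matrix_vector_mult_scaleR vjoin_scale h_def)
  qed
  have Dz: "Dn X *v (c *\<^sub>R Z2) = c *\<^sub>R vjoin (- (?G *v e)) e"
    by (simp add: Dn_mult neg_mv matrix_vector_mult_scaleR vjoin_scale e_def matrix_vector_mul_assoc)
  have Bz: "Bn X *v (c *\<^sub>R b2) = c *\<^sub>R vjoin (?G *v b2) (- b2)"
    by (simp add: Bn_mult matrix_vector_mult_scaleR vjoin_scale)
  have H: "c *\<^sub>R (beta_tilde \<alpha> \<sigma> X Y - \<beta>) = c *\<^sub>R vjoin h 0 + c *\<^sub>R vjoin (- (?G *v e)) e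
      - lam *\<^sub>R (c *\<^sub>R vjoin (- (?G *v e)) e - c *\<^sub>R vjoin (?G *v b2) (- b2))"
    unfolding beta_tilde_def lam_def[symmetric] bR bU d_def
    by (simp add: beq vjoin_add vjoin_diff vjoin_scale vjoin_uminus vjoin_eq_iff vec.add algebra_simps)
  have H2: "c *\<^sub>R (beta_tilde \<alpha> \<sigma> X Y - \<beta>) = Cn X *v (c *\<^sub>R Z1) + Dn X *v (c *\<^sub>R Z2)
     - (1 / (1 + exp (- 2 * \<alpha> * real CARD('k2)) * exp (\<alpha> * (norm (Z2 + ?Rm *v b2))\<^sup>2 / \<sigma>\<^sup>2)))
       *\<^sub>R (Dn X *v (c *\<^sub>R Z2) - Bn X *v (c *\<^sub>R b2))"
    unfolding H Cz Dz Bz lam ..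
  show ?thesis using H2 unfolding Y_def Z1_def Z2_def b2_def .
qed

end


lemma cont_mv[continuous_intros]:
  fixes A :: "real^'n^'m"
  assumes "continuous_on S f"
  shows "continuous_on S (\<lambda>x. A *v f x)"
proof -
  have "bounded_linear ((*v) A)" by (simp add: matrix_vector_mul_linear linear_conv_bounded_linear)
  from bounded_linear.continuous_on[OF this assms] show ?thesis .
qed

lemma lam_comp:
  fixes a k t s :: real
  shows "1 / (1 + exp (2 * a * k) * exp (- a * t / s)) = 1 - 1 / (1 + exp (- 2 * a * k) * exp (a * t / s))"
proof -
  define E where "E = exp (- 2 * a * k) * exp (a * t / s)"
  have Ep: "E > 0" by (simp add: E_def)
  have "exp (2 * a * k) * exp (- a * t / s) * E = 1"
    by (simp add: E_def exp_add[symmetric] mult_ac)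
  then have e: "exp (2 * a * k) * exp (- a * t / s) = 1 / E" using Ep by (simp add: field_simps)
  show ?thesis unfolding e E_def[symmetric] using Ep by (simp add: field_simps)
qed

theorem proposition1:
  fixes X :: "real^('k1::finite+'k2::finite)^'n" and \<beta> :: "real^('k1+'k2)" and \<sigma> \<alpha> :: real
  assumes rank: "rank X = CARD('k1+'k2)"
    and n_ge_k: "CARD('n) \<ge> CARD('k1+'k2)"
    and sigma_pos: "\<sigma> > 0"
    and alpha_pos: "\<alpha> > 0"
  shows
    "distr (model_dist X \<beta> \<sigma>) borel
        (\<lambda>Y. sqrt (real CARD('n)) *\<^sub>R (beta_tilde \<alpha> \<sigma> X Y - \<beta>))
     = distr (gauss_vec \<sigma> \<Otimes>\<^sub>M gauss_vec \<sigma>) borel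
        (\<lambda>(z1 :: real^'k1::finite, z2 :: real^'k2::finite).
           Bn X *v (sqrt (real CARD('n)) *\<^sub>R vsnd \<beta>)
           + Cn X *v (sqrt (real CARD('n)) *\<^sub>R z1)
           + (1 / (1 + exp (2 * \<alpha> * real CARD('k2))
                     * exp (- \<alpha> * (norm (z2 + matrix_sqrt (M22 X) *v vsnd \<beta>))\<^sup>2 / \<sigma>\<^sup>2)))
             *\<^sub>R (Dn X *v (sqrt (real CARD('n)) *\<^sub>R z2)
                  - Bn X *v (sqrt (real CARD('n)) *\<^sub>R vsnd \<beta>)))
     \<and> distr (model_dist X \<beta> \<sigma>) borel
        (\<lambda>Y. sqrt (real CARD('n)) *\<^sub>R (beta_tilde \<alpha> \<sigma> X Y - \<beta>))
     = distr (gauss_vec \<sigma> \<Otimes>\<^sub>M gauss_vec \<sigma>) borel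
        (\<lambda>(z1 :: real^'k1::finite, z2 :: real^'k2::finite).
           Cn X *v (sqrt (real CARD('n)) *\<^sub>R z1)
           + Dn X *v (sqrt (real CARD('n)) *\<^sub>R z2)
           - (1 / (1 + exp (- 2 * \<alpha> * real CARD('k2))
                     * exp (\<alpha> * (norm (z2 + matrix_sqrt (M22 X) *v vsnd \<beta>))\<^sup>2 / \<sigma>\<^sup>2)))
             *\<^sub>R (Dn X *v (sqrt (real CARD('n)) *\<^sub>R z2)
                  - Bn X *v (sqrt (real CARD('n)) *\<^sub>R vsnd \<beta>)))"
proof -
  have injX: "inj ((*v) X)" by (rule full_rank_injective[THEN iffD1, OF rank])
  have inj: "x = 0" if "X *v x = 0" for x
    using injX that by (metis injD matrix_vector_mult_0_right)
  define c where "c = sqrt (real CARD('n))"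
  define F1 where "F1 = (\<lambda>(z1 :: real^'k1::finite, z2 :: real^'k2::finite).
           Bn X *v (c *\<^sub>R vsnd \<beta>)
           + Cn X *v (c *\<^sub>R z1)
           + (1 / (1 + exp (2 * \<alpha> * real CARD('k2))
                     * exp (- \<alpha> * (norm (z2 + matrix_sqrt (M22 X) *v vsnd \<beta>))\<^sup>2 / \<sigma>\<^sup>2)))
             *\<^sub>R (Dn X *v (c *\<^sub>R z2)
                  - Bn X *v (c *\<^sub>R vsnd \<beta>)))"
  define F2 where "F2 = (\<lambda>(z1 :: real^'k1::finite, z2 :: real^'k2::finite).
           Cn X *v (c *\<^sub>R z1)
           + Dn X *v (c *\<^sub>R z2)
           - (1 / (1 + exp (- 2 * \<alpha> * real CARD('k2))
                     * exp (\<alpha> * (norm (z2 + matrix_sqrt (M22 X) *v vsnd \<beta>))\<^sup>2 / \<sigma>\<^sup>2)))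
             *\<^sub>R (Dn X *v (c *\<^sub>R z2)
                  - Bn X *v (c *\<^sub>R vsnd \<beta>)))"
  have F12: "F1 = F2"
  proof (rule ext, clarify)
    fix z1 :: "real^'k1" and z2 :: "real^'k2"
    show "F1 (z1, z2) = F2 (z1, z2)"
      unfolding F1_def F2_def case_prod_conv lam_comp by (simp add: algebra_simps)
  qed
  define H where "H = (\<lambda>Y. c *\<^sub>R (beta_tilde \<alpha> \<sigma> X Y - \<beta>))"
  define L where "L = (\<lambda>u. (Q1m X *v u, Q2m X *v u))"
  let ?Gn = "gauss_vec \<sigma> :: (real^'n) measure"
  let ?GK = "(gauss_vec \<sigma> :: (real^'k1) measure) \<Otimes>\<^sub>M (gauss_vec \<sigma> :: (real^'k2) measure)"
  have HL: "H (X *v \<beta> + u) = F2 (L u)" for u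
    unfolding H_def F2_def L_def by (simp add: est_identity[OF inj])
  have sGn: "sets ?Gn = sets borel" by (simp add: gauss_vec_def)
  have sGK: "sets ?GK = sets borel"
    by (simp add: gauss_vec_def borel_prod[symmetric])
  have contF2: "continuous_on UNIV F2"
  proof -
    have eqF: "F2 = (\<lambda>z. Cn X *v (c *\<^sub>R fst z)
           + Dn X *v (c *\<^sub>R snd z)
           - (1 / (1 + exp (- 2 * \<alpha> * real CARD('k2))
                     * exp (\<alpha> * (norm (snd z + matrix_sqrt (M22 X) *v vsnd \<beta>))\<^sup>2 / \<sigma>\<^sup>2)))
             *\<^sub>R (Dn X *v (c *\<^sub>R snd z)
                  - Bn X *v (c *\<^sub>R vsnd \<beta>)))"
      by (simp add: F2_def fun_eq_iff split_beta)
    show ?thesis unfolding eqF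
      using sigma_pos by (intro continuous_intros) (auto intro: add_pos_pos simp: add_nonneg_eq_0_iff)
  qed
  have mF2b: "F2 \<in> borel_measurable borel" by (rule borel_measurable_continuous_onI[OF contF2])
  have mF2: "F2 \<in> measurable ?GK borel" using mF2b by (simp add: measurable_cong_sets[OF sGK refl])
  have mLb: "L \<in> borel_measurable borel"
    unfolding L_def by (intro lin_meas linearI) (simp_all add: vec.add matrix_vector_mult_scaleR)
  have mL: "L \<in> measurable ?Gn ?GK" using mLb by (simp add: measurable_cong_sets[OF sGn sGK])
  have msh: "(\<lambda>u. X *v \<beta> + u) \<in> measurable ?Gn borel" by (simp add: measurable_cong_sets[OF sGn refl])
  have Heq: "H = (\<lambda>Y. F2 (L (Y - X *v \<beta>)))"
    using HL[of "_ - X *v \<beta>"] by (simp add: fun_eq_iff)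
  have mH: "H \<in> borel_measurable borel"
    unfolding Heq using mF2b mLb by measurable
  have "distr (model_dist X \<beta> \<sigma>) borel H = distr ?Gn borel (H \<circ> (\<lambda>u. X *v \<beta> + u))"
    unfolding model_dist_def by (rule distr_distr[OF mH msh])
  also have "H \<circ> (\<lambda>u. X *v \<beta> + u) = F2 \<circ> L" by (simp add: fun_eq_iff HL)
  also have "distr ?Gn borel (F2 \<circ> L) = distr (distr ?Gn ?GK L) borel F2"
    by (rule distr_distr[OF mF2 mL, symmetric])
  also have "distr ?Gn ?GK L = ?GK"
    unfolding L_def
    by (rule gauss_proj[OF sigma_pos Q1Q1t[OF inj] Q2Q2t[OF inj] Q1Q2t[OF inj]])
  finally have main: "distr (model_dist X \<beta> \<sigma>) borel H = distr ?GK borel F2" .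
  show ?thesis
    using main F12 unfolding H_def F1_def F2_def c_def by simp
qed


end
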